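(* Let $u^1,u^2\in\mathcal U_2$ and $u:=u^1\oplus_cu^2$. Then $u\in\mathcal U_2$ and, with $f=f(t,c,x)\in(0,c)$ the function determined by $u_c(t,c,x)=u^1_c(t,f,x)=u^2_c(t,c-f,x)$, $$\frac{u_c}{u_{cc}}(t,c,x)=\frac{u^1_c}{u^1_{cc}}(t,f,x)+\frac{u^2_c}{u^2_{cc}}(t,c-f,x),\qquad \frac{u_{cx^i}}{u_{cc}}(t,c,x)=\frac{u^1_{cx^i}}{u^1_{cc}}(t,f,x)+\frac{u^2_{cx^i}}{u^2_{cc}}(t,c-f,x).$$
   Context: A function on $(0,\infty)$ satisfies the Inada conditions if it is strictly concave, strictly increasing and continuously differentiable on $(0,\infty)$ with derivative tending to $\infty$ at $0$ and to $0$ at $\infty$. $\mathcal U_1$ is the family of measurable real functions $u=u(t,c,x)$ on $[0,1]\times(0,\infty)\times\mathbb R^d$ such that $u(t,\cdot,x)$ satisfies the Inada conditions for each $(t,x)$ and, for some $N=N(u)>0$, $|u(t,e^y,x)|\le e^{N(1+|x|+|y|)}$ for all $(t,x,y)$. $\mathcal U_2$ is the family of $u\in\mathcal U_1$ such that $u_{cc}$ and $u_{cx^i}$ ($i=1,\dots,d$) exist and are continuous in $(c,x)$, $u_{cc}<0$, and for some $N>0$, $-cu_{cc}/u_c+|u_{cx^i}|/u_c\le N$ on $[0,1]\times(0,\infty)\times\mathbb R^d$. The sup-convolution is $(u^1\oplus_cu^2)(t,c,x):=\sup\{u^1(t,c_1,x)+u^2(t,c_2,x):c_1,c_2>0,\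 c_1+c_2=c\}$. *)

theory Defs
  imports "HOL-Analysis.Analysis"
begin

definition strictly_concave_on :: "real set \<Rightarrow> (real \<Rightarrow> real) \<Rightarrow> bool" where
  "strictly_concave_on S g \<longleftrightarrow>
     (\<forall>a\<in>S. \<forall>b\<in>S. \<forall>\<theta>::real. a \<noteq> b \<longrightarrow> 0 < \<theta> \<longrightarrow> \<theta> < 1 \<longrightarrow>
        \<theta> * g a + (1 - \<theta>) * g b < g (\<theta> * a + (1 - \<theta>) * b))"

definition inada :: "(real \<Rightarrow> real) \<Rightarrow> bool" where
  "inada g \<longleftrightarrow>
     strictly_concave_on {0<..} g \<and>
     strict_mono_on {0<..} g \<and>
     (\<forall>c>0. g differentiable (at c)) \<and>
     continuous_on {0<..} (deriv g) \<and>
     filterlim (deriv g) at_top (at_right 0) \<and>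
     ((deriv g) \<longlongrightarrow> 0) at_top"

definition u_c :: "(real \<Rightarrow> real \<Rightarrow> real^'d \<Rightarrow> real) \<Rightarrow> real \<Rightarrow> real \<Rightarrow> real^'d \<Rightarrow> real" where
  "u_c u t c x = deriv (\<lambda>c'. u t c' x) c"

definition u_cc :: "(real \<Rightarrow> real \<Rightarrow> real^'d \<Rightarrow> real) \<Rightarrow> real \<Rightarrow> real \<Rightarrow> real^'d \<Rightarrow> real" where
  "u_cc u t c x = deriv (\<lambda>c'. u_c u t c' x) c"

definition u_cx :: "(real \<Rightarrow> real \<Rightarrow> real^'d \<Rightarrow> real) \<Rightarrow> 'd \<Rightarrow> real \<Rightarrow> real \<Rightarrow> real^'d \<Rightarrow> real" where
  "u_cx u i t c x = deriv (\<lambda>s. u_c u t c (x + s *\<^sub>R axis i 1)) 0"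

definition U1 :: "(real \<Rightarrow> real \<Rightarrow> real^'d \<Rightarrow> real) set" where
  "U1 = {u. (\<lambda>(t, c, x). u t c x) \<in>
              borel_measurable (restrict_space borel ({0..1} \<times> {0<..} \<times> UNIV)) \<and>
            (\<forall>t\<in>{0..1}. \<forall>x. inada (\<lambda>c. u t c x)) \<and>
            (\<exists>N>0. \<forall>t\<in>{0..1}. \<forall>x y.
               \<bar>u t (exp y) x\<bar> \<le> exp (N * (1 + norm x + \<bar>y\<bar>)))}"

definition U2 :: "(real \<Rightarrow> real \<Rightarrow> real^'d \<Rightarrow> real) set" where
  "U2 = {u. u \<in> U1 \<and>
            (\<forall>t\<in>{0..1}. \<forall>c>0. \<forall>x. (\<lambda>c'. u_c u t c' x) differentiable (at c)) \<and>
            (\<forall>t\<in>{0..1}. \<forall>c>0. \<forall>x. \<forall>i.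
               (\<lambda>s. u_c u t c (x + s *\<^sub>R axis i 1)) differentiable (at 0)) \<and>
            (\<forall>t\<in>{0..1}. continuous_on ({0<..} \<times> UNIV) (\<lambda>(c, x). u_cc u t c x)) \<and>
            (\<forall>t\<in>{0..1}. \<forall>i. continuous_on ({0<..} \<times> UNIV) (\<lambda>(c, x). u_cx u i t c x)) \<and>
            (\<forall>t\<in>{0..1}. \<forall>c>0. \<forall>x. u_cc u t c x < 0) \<and>
            (\<exists>N>0. \<forall>t\<in>{0..1}. \<forall>c>0. \<forall>x. \<forall>i.
               - c * u_cc u t c x / u_c u t c x + \<bar>u_cx u i t c x\<bar> / u_c u t c x \<le> N)}"

definition supconv :: "(real \<Rightarrow> real \<Rightarrow> 'x \<Rightarrow> real) \<Rightarrow> (real \<Rightarrow> real \<Rightarrow> 'x \<Rightarrow> real)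
                        \<Rightarrow> real \<Rightarrow> real \<Rightarrow> 'x \<Rightarrow> real" where
  "supconv u1 u2 t c x =
     Sup {u1 t c1 x + u2 t c2 x | c1 c2. c1 > 0 \<and> c2 > 0 \<and> c1 + c2 = c}"

end

theory Submission
  imports Defs
begin

lemma mvt_between:
  fixes f f' :: "real \<Rightarrow> real"
  assumes "\<And>z. min x y \<le> z \<Longrightarrow> z \<le> max x y \<Longrightarrow> (f has_real_derivative f' z) (at z)"
  shows "\<exists>z. \<bar>z - x\<bar> \<le> \<bar>y - x\<bar> \<and> f y - f x = (y - x) * f' z"
proof (cases x y rule: linorder_cases)
  case less
  then obtain z where "x < z" "z < y" "f y - f x = (y - x) * f' z"
    using MVT2[of x y f f'] assms by auto
  then show ?thesis by (intro exI[of _ z]) auto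
next
  case equal then show ?thesis by auto
next
  case greater
  then obtain z where "y < z" "z < x" "f x - f y = (x - y) * f' z"
    using MVT2[of y x f f'] assms by auto
  then show ?thesis by (intro exI[of _ z]) (auto simp: algebra_simps)
qed

lemma msplit:
  fixes G Ga :: "real \<Rightarrow> real \<Rightarrow> real" and a :: "real \<Rightarrow> real"
  assumes r: "r > 0"
    and der: "\<And>b s. \<bar>b - a0\<bar> < r \<Longrightarrow> \<bar>s - s0\<bar> < r \<Longrightarrow> ((\<lambda>b. G b s) has_real_derivative Ga b s) (at b)"
    and cont: "isCont (\<lambda>p. Ga (fst p) (snd p)) (a0, s0)"
    and acont: "(a \<longlongrightarrow> a0) (at s0)"
  shows "((\<lambda>s. if a s = a0 then Ga a0 s else (G (a s) s - G a0 s) / (a s - a0)) \<longlongrightarrow> Ga a0 s0) (at s0)"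
proof (rule tendstoI)
  fix e :: real assume e: "e > 0"
  from cont[unfolded continuous_at_eps_delta] e obtain d where d: "d > 0"
    and dd: "\<And>p. dist p (a0, s0) < d \<Longrightarrow> dist (Ga (fst p) (snd p)) (Ga a0 s0) < e"
    by fastforce
  define m where "m = min d r / 2"
  have m: "m > 0" "2*m \<le> d" "m < r" using d r by (auto simp: m_def)
  have ev1: "\<forall>\<^sub>F s in at s0. dist (a s) a0 < m" using acont m(1) by (rule tendstoD)
  have ev2: "\<forall>\<^sub>F s in at s0. dist s s0 < m" using m(1) eventually_at by blast
  show "\<forall>\<^sub>F s in at s0. dist (if a s = a0 then Ga a0 s else (G (a s) s - G a0 s) / (a s - a0)) (Ga a0 s0) < e"
    using ev1 ev2
  proof eventually_elim
    case (elim s)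
    have ns: "norm (b - a0, s - s0) < d" if "\<bar>b - a0\<bar> \<le> m" for b
    proof -
      have "norm (b - a0, s - s0) \<le> norm (b - a0) + norm (s - s0)" by (rule norm_Pair_le)
      also have "\<dots> < d" using that elim m by (auto simp: dist_real_def)
      finally show ?thesis .
    qed
    show ?case
    proof (cases "a s = a0")
      case True
      show ?thesis using True dd[of "(a0, s)"] ns[of a0] m by (simp add: dist_norm)
    next
      case False
      have "\<exists>z. \<bar>z - a0\<bar> \<le> \<bar>a s - a0\<bar> \<and> G (a s) s - G a0 s = (a s - a0) * Ga z s"
        by (rule mvt_between[where f="\<lambda>b. G b s"], rule der)
           (use elim m in \<open>auto simp: dist_real_def\<close>)
      then obtain z where z: "\<bar>z - a0\<bar> \<le> \<bar>a s - a0\<bar>" "G (a s) s - G a0 s = (a s - a0) * Ga z s" by blast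
      have "dist (z, s) (a0, s0) < d" using ns[of z] z elim by (simp add: dist_norm dist_real_def)
      then show ?thesis using dd[of "(z, s)"] False z by simp
    qed
  qed
qed

lemma neq_at: "\<forall>\<^sub>F s in at (s0::real). s \<noteq> s0"
  by (simp add: eventually_at_filter)

lemma msplit_id:
  "(if a = a0 then Ga0 else (G a - G a0) / (a - a0)) * (a - a0) = G a - (G a0 :: real)"
  by auto

lemma ift:
  fixes G Ga :: "real \<Rightarrow> real \<Rightarrow> real" and a :: "real \<Rightarrow> real"
  assumes r: "r > 0"
    and der: "\<And>b s. \<bar>b - a0\<bar> < r \<Longrightarrow> \<bar>s - s0\<bar> < r \<Longrightarrow> ((\<lambda>b. G b s) has_real_derivative Ga b s) (at b)"
    and cont: "isCont (\<lambda>p. Ga (fst p) (snd p)) (a0, s0)"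
    and acont: "(a \<longlongrightarrow> a0) (at s0)"
    and as0: "a s0 = a0"
    and zero: "\<forall>\<^sub>F s in at s0. G (a s) s = 0" and zero0: "G a0 s0 = 0"
    and Gs: "((\<lambda>s. G a0 s) has_real_derivative Gs0) (at s0)"
    and nz: "Ga a0 s0 \<noteq> 0"
  shows "(a has_real_derivative (- Gs0 / Ga a0 s0)) (at s0)"
proof -
  define Q where "Q s = (if a s = a0 then Ga a0 s else (G (a s) s - G a0 s) / (a s - a0))" for s
  have Ql: "(Q \<longlongrightarrow> Ga a0 s0) (at s0)" unfolding Q_def by (rule msplit[OF r der cont acont])
  have Qnz: "\<forall>\<^sub>F s in at s0. Q s \<noteq> 0" using tendsto_imp_eventually_ne[OF Ql nz] .
  have Pl: "((\<lambda>s. (G a0 s - G a0 s0) / (s - s0)) \<longlongrightarrow> Gs0) (at s0)"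
    using Gs by (simp add: has_field_derivative_iff)
  have lim: "((\<lambda>s. - ((G a0 s - G a0 s0) / (s - s0)) / Q s) \<longlongrightarrow> - Gs0 / Ga a0 s0) (at s0)"
    by (intro tendsto_intros Pl Ql nz)
  show ?thesis unfolding has_field_derivative_iff
  proof (rule Lim_transform_eventually[OF lim])
    show "\<forall>\<^sub>F s in at s0. - ((G a0 s - G a0 s0) / (s - s0)) / Q s = (a s - a s0) / (s - s0)"
      using zero Qnz neq_at
    proof eventually_elim
      case (elim s)
      have "Q s * (a s - a0) = G (a s) s - G a0 s" unfolding Q_def by (rule msplit_id)
      then have "G a0 s = - (Q s * (a s - a0))" using elim by simp
      then have "- ((G a0 s - G a0 s0) / (s - s0)) / Q s = (Q s * (a s - a0)) / (s - s0) / Q s"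
        using zero0 by simp
      also have "\<dots> = (a s - a0) / (s - s0)" using elim by simp
      finally show ?case using as0 by simp
    qed
  qed
qed

lemma chain2:
  fixes G Ga :: "real \<Rightarrow> real \<Rightarrow> real" and a :: "real \<Rightarrow> real"
  assumes r: "r > 0"
    and der: "\<And>b s. \<bar>b - a0\<bar> < r \<Longrightarrow> \<bar>s - s0\<bar> < r \<Longrightarrow> ((\<lambda>b. G b s) has_real_derivative Ga b s) (at b)"
    and cont: "isCont (\<lambda>p. Ga (fst p) (snd p)) (a0, s0)"
    and as0: "a s0 = a0"
    and ad: "(a has_real_derivative a') (at s0)"
    and Gs: "((\<lambda>s. G a0 s) has_real_derivative Gs0) (at s0)"
  shows "((\<lambda>s. G (a s) s) has_real_derivative (Ga a0 s0 * a' + Gs0)) (at s0)"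
proof -
  have acont: "(a \<longlongrightarrow> a0) (at s0)"
    using DERIV_isCont[OF ad] as0 by (simp add: isCont_def)
  define Q where "Q s = (if a s = a0 then Ga a0 s else (G (a s) s - G a0 s) / (a s - a0))" for s
  have Ql: "(Q \<longlongrightarrow> Ga a0 s0) (at s0)" unfolding Q_def by (rule msplit[OF r der cont acont])
  have Pl: "((\<lambda>s. (G a0 s - G a0 s0) / (s - s0)) \<longlongrightarrow> Gs0) (at s0)"
    using Gs by (simp add: has_field_derivative_iff)
  have Al: "((\<lambda>s. (a s - a s0) / (s - s0)) \<longlongrightarrow> a') (at s0)"
    using ad by (simp add: has_field_derivative_iff)
  have lim: "((\<lambda>s. Q s * ((a s - a s0) / (s - s0)) + (G a0 s - G a0 s0) / (s - s0)) \<longlongrightarrow> Ga a0 s0 * a' + Gs0) (at s0)"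
    by (intro tendsto_intros Pl Ql Al)
  show ?thesis unfolding has_field_derivative_iff
  proof (rule Lim_transform_eventually[OF lim])
    show "\<forall>\<^sub>F s in at s0. Q s * ((a s - a s0) / (s - s0)) + (G a0 s - G a0 s0) / (s - s0) = (G (a s) s - G (a s0) s0) / (s - s0)"
      using neq_at
    proof eventually_elim
      case (elim s)
      have "Q s * (a s - a0) = G (a s) s - G a0 s" unfolding Q_def by (rule msplit_id)
      have "Q s * ((a s - a s0) / (s - s0)) + (G a0 s - G a0 s0) / (s - s0)
          = (Q s * (a s - a0) + (G a0 s - G a0 s0)) / (s - s0)" using elim as0 by (simp add: add_divide_distrib)
      also have "\<dots> = (G (a s) s - G (a s0) s0) / (s - s0)" using \<open>Q s * (a s - a0) = _\<close> as0 by simp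
      finally show ?case .
    qed
  qed
qed

lemma root_tendsto:
  fixes \<psi> :: "'p \<Rightarrow> real \<Rightarrow> real" and r hi :: "'p \<Rightarrow> real"
  assumes e0: "0 < e0" "e0 < f0"
    and ev: "\<And>\<epsilon>. 0 < \<epsilon> \<Longrightarrow> \<epsilon> < e0 \<Longrightarrow>
       \<forall>\<^sub>F p in Fl. 0 < \<psi> p (f0 - \<epsilon>) \<and> \<psi> p (f0 + \<epsilon>) < 0 \<and> f0 + \<epsilon> < hi p"
    and rt: "\<forall>\<^sub>F p in Fl. 0 < r p \<and> r p < hi p \<and> \<psi> p (r p) = 0 \<and>
       (\<forall>a b. 0 < a \<longrightarrow> a < b \<longrightarrow> b < hi p \<longrightarrow> \<psi> p b < \<psi> p a)"
  shows "(r \<longlongrightarrow> f0) Fl"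
proof (rule tendstoI)
  fix e :: real assume e: "e > 0"
  define \<epsilon> where "\<epsilon> = min (e/2) (e0/2)"
  have \<epsilon>: "0 < \<epsilon>" "\<epsilon> < e0" "\<epsilon> < e" using e e0 by (auto simp: \<epsilon>_def)
  show "\<forall>\<^sub>F p in Fl. dist (r p) f0 < e"
    using ev[OF \<epsilon>(1,2)] rt
  proof eventually_elim
    case (elim p)
    from elim have p1: "0 < \<psi> p (f0 - \<epsilon>)" and p2: "\<psi> p (f0 + \<epsilon>) < 0" and p3: "f0 + \<epsilon> < hi p"
      and r1: "0 < r p" and r2: "r p < hi p" and r3: "\<psi> p (r p) = 0"
      and mono: "\<And>a b. 0 < a \<Longrightarrow> a < b \<Longrightarrow> b < hi p \<Longrightarrow> \<psi> p b < \<psi> p a" by auto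
    have lo: "f0 - \<epsilon> < r p"
    proof (rule ccontr)
      assume "\<not> f0 - \<epsilon> < r p"
      then have "r p < f0 - \<epsilon> \<or> r p = f0 - \<epsilon>" by auto
      then show False
      proof
        assume "r p < f0 - \<epsilon>"
        then have "\<psi> p (f0 - \<epsilon>) < \<psi> p (r p)" using r1 p3 \<epsilon> by (intro mono) auto
        then show False using p1 r3 by simp
      next
        assume "r p = f0 - \<epsilon>" then show False using p1 r3 by simp
      qed
    qed
    have hi: "r p < f0 + \<epsilon>"
    proof (rule ccontr)
      assume "\<not> r p < f0 + \<epsilon>"
      then have "f0 + \<epsilon> < r p \<or> r p = f0 + \<epsilon>" by auto
      then show False
      proof
        assume a: "f0 + \<epsilon> < r p"
        have "0 < f0 + \<epsilon>" using e0 \<epsilon> by simp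
        then have "\<psi> p (r p) < \<psi> p (f0 + \<epsilon>)" using a r2 by (intro mono) auto
        then show False using p2 r3 by simp
      next
        assume "r p = f0 + \<epsilon>" then show False using p2 r3 by simp
      qed
    qed
    show ?case using lo hi \<epsilon> by (simp add: dist_real_def abs_less_iff)
  qed
qed



lemma mix_insert:
  fixes x x0 :: "real^'d"
  assumes "j \<notin> S"
  shows "(\<chi> k. if k \<in> insert j S then x$k else x0$k)
       = (\<chi> k. if k \<in> S then x$k else x0$k) + (x$j - x0$j) *\<^sub>R axis j 1"
  using assms by (auto simp: vec_eq_iff axis_def)

lemma joint_cont:
  fixes h :: "real \<Rightarrow> real^'d \<Rightarrow> real" and hx :: "'d \<Rightarrow> real \<Rightarrow> real^'d \<Rightarrow> real"
  assumes hc: "\<And>c x. 0 < c \<Longrightarrow> isCont (\<lambda>c. h c x) c"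
    and hxd: "\<And>c x i. 0 < c \<Longrightarrow> ((\<lambda>s. h c (x + s *\<^sub>R axis i 1)) has_real_derivative hx i c x) (at 0)"
    and hxc: "\<And>i. continuous_on ({0<..} \<times> UNIV) (\<lambda>(c,x). hx i c x)"
    and c0: "0 < c0"
  shows "isCont (\<lambda>p. h (fst p) (snd p)) (c0, x0)"
proof -
  have isc: "isCont (\<lambda>p. hx i (fst p) (snd p)) (c0, x0)" for i
  proof -
    have "open ({0::real<..} \<times> (UNIV :: (real^'d) set))" by (rule open_Times[OF open_greaterThan open_UNIV])
    then have "isCont (\<lambda>(c,x). hx i c x) (c0, x0)"
      using hxc[of i] c0 continuous_on_eq_continuous_at[of "{0::real<..} \<times> (UNIV :: (real^'d) set)"] by auto
    then show ?thesis by (simp add: case_prod_beta')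
  qed
  define M where "M = (\<Sum>i\<in>UNIV. \<bar>hx i c0 x0\<bar>) + 1"
  have M0: "M \<ge> 1" unfolding M_def by (simp add: sum_nonneg)
  have evi: "\<forall>\<^sub>F p in nhds (c0, x0). \<bar>hx i (fst p) (snd p)\<bar> \<le> M" for i
  proof -
    obtain d where d: "d > 0" "\<And>p. dist p (c0,x0) < d \<Longrightarrow> dist (hx i (fst p) (snd p)) (hx i c0 x0) < 1"
      using isc[of i, unfolded continuous_at_eps_delta, rule_format, of 1] by auto
    have "\<bar>hx i c0 x0\<bar> \<le> (\<Sum>i\<in>UNIV. \<bar>hx i c0 x0\<bar>)"
      by (rule member_le_sum) auto
    then have "\<forall>p. dist p (c0,x0) < d \<longrightarrow> \<bar>hx i (fst p) (snd p)\<bar> \<le> M"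
      using d(2) unfolding M_def dist_real_def by (smt (verit))
    then show ?thesis unfolding eventually_nhds_metric using d by blast
  qed
  have "\<forall>\<^sub>F p in nhds (c0, x0). (\<forall>i. \<bar>hx i (fst p) (snd p)\<bar> \<le> M) \<and> 0 < fst p"
  proof (rule eventually_conj)
    show "\<forall>\<^sub>F p in nhds (c0, x0). \<forall>i. \<bar>hx i (fst p) (snd p)\<bar> \<le> M"
      by (rule eventually_all_finite) (rule evi)
    have "open {p :: real \<times> (real^'d). 0 < fst p}"
      by (rule open_Collect_less) (intro continuous_intros)+
    then show "\<forall>\<^sub>F p in nhds (c0, x0). 0 < fst p"
      using c0 unfolding eventually_nhds by (intro exI[of _ "{p :: real \<times> (real^'d). 0 < fst p}"]) auto
  qed
  then obtain d where d: "d > 0"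
    and dd: "\<And>p. dist p (c0,x0) < d \<Longrightarrow> (\<forall>i. \<bar>hx i (fst p) (snd p)\<bar> \<le> M) \<and> 0 < fst p"
    unfolding eventually_nhds_metric by blast
  have key: "\<bar>h c x - h c x0\<bar> \<le> M * (\<Sum>k\<in>UNIV. \<bar>x$k - x0$k\<bar>)"
    if cc: "\<bar>c - c0\<bar> < d/2" and xx: "(\<Sum>k\<in>UNIV. \<bar>x$k - x0$k\<bar>) < d/2" for c x
  proof -
    have "dist (c, x0) (c0, x0) < d" using cc d by (simp add: dist_norm dist_real_def)
    then have cpos: "0 < c" using dd[of "(c, x0)"] by simp
    have "\<bar>h c (\<chi> k. if k \<in> S then x$k else x0$k) - h c x0\<bar> \<le> M * (\<Sum>k\<in>S. \<bar>x$k - x0$k\<bar>)"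
      if "finite S" for S :: "'d set"
      using that
    proof (induction S rule: finite_induct)
      case empty
      have "(\<chi> k. if k \<in> {} then x$k else x0$k) = x0" by (simp add: vec_eq_iff)
      then show ?case by simp
    next
      case (insert j S)
      define y where "y = (\<chi> k. if k \<in> S then x$k else x0$k)"
      define \<delta> where "\<delta> = x$j - x0$j"
      define \<phi> where "\<phi> s = h c (y + s *\<^sub>R axis j 1)" for s
      have eq: "(\<chi> k. if k \<in> insert j S then x$k else x0$k) = y + \<delta> *\<^sub>R axis j 1"
        unfolding y_def \<delta>_def by (rule mix_insert) (fact insert.hyps)
      have der: "(\<phi> has_real_derivative hx j c (y + z *\<^sub>R axis j 1)) (at z)" for z
      proof -
        have "((\<lambda>s. h c ((y + z *\<^sub>R axis j 1) + s *\<^sub>R axis j 1)) has_real_derivative hx j c (y + z *\<^sub>R axis j 1)) (at 0)"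
          by (rule hxd[OF cpos])
        moreover have "(\<lambda>s. h c ((y + z *\<^sub>R axis j 1) + s *\<^sub>R axis j 1)) = (\<lambda>s. \<phi> (s + z))"
          by (rule ext) (simp add: \<phi>_def scaleR_add_left add_ac)
        ultimately have "((\<lambda>s. \<phi> (s + z)) has_real_derivative hx j c (y + z *\<^sub>R axis j 1)) (at 0)" by simp
        then show ?thesis using DERIV_shift[of \<phi> _ 0 z] by simp
      qed
      obtain z where z: "\<bar>z - 0\<bar> \<le> \<bar>\<delta> - 0\<bar>" "\<phi> \<delta> - \<phi> 0 = (\<delta> - 0) * hx j c (y + z *\<^sub>R axis j 1)"
        using mvt_between[of 0 \<delta> \<phi> "\<lambda>z. hx j c (y + z *\<^sub>R axis j 1)"] der by blast
      have comp: "\<bar>(y + z *\<^sub>R axis j 1 - x0)$k\<bar> \<le> \<bar>x$k - x0$k\<bar>" for k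
      proof -
        have e: "(y + z *\<^sub>R axis j 1 - x0)$k = (if k\<in>S then x$k - x0$k else 0) + (if k = j then z else 0)"
          by (simp add: y_def axis_def)
        show ?thesis
        proof (cases "k = j")
          case True
          then show ?thesis using e z(1) insert.hyps(2) unfolding \<delta>_def by simp
        next
          case False
          then show ?thesis using e by simp
        qed
      qed
      have "norm (y + z *\<^sub>R axis j 1 - x0) \<le> (\<Sum>k\<in>UNIV. \<bar>(y + z *\<^sub>R axis j 1 - x0)$k\<bar>)"
        by (rule norm_le_l1_cart)
      also have "\<dots> \<le> (\<Sum>k\<in>UNIV. \<bar>x$k - x0$k\<bar>)" by (rule sum_mono) (rule comp)
      finally have nrm: "norm (y + z *\<^sub>R axis j 1 - x0) < d/2" using xx by simp
      have "dist (c, y + z *\<^sub>R axis j 1) (c0, x0) \<le> norm (c - c0) + norm (y + z *\<^sub>R axis j 1 - x0)"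
        unfolding dist_norm using norm_Pair_le[of "c - c0" "y + z *\<^sub>R axis j 1 - x0"] by simp
      also have "\<dots> < d" using nrm cc by simp
      finally have "\<bar>hx j c (y + z *\<^sub>R axis j 1)\<bar> \<le> M" using dd by auto
      then have b1: "\<bar>\<phi> \<delta> - \<phi> 0\<bar> \<le> M * \<bar>\<delta>\<bar>"
        using z(2) by (simp add: abs_mult) (metis abs_ge_zero mult.commute mult_left_mono)
      have "\<phi> 0 = h c y" unfolding \<phi>_def by simp
      then have "\<bar>h c (\<chi> k. if k \<in> insert j S then x$k else x0$k) - h c x0\<bar>
          \<le> \<bar>\<phi> \<delta> - \<phi> 0\<bar> + \<bar>h c y - h c x0\<bar>" unfolding eq \<phi>_def by simp
      also have "\<dots> \<le> M * \<bar>\<delta>\<bar> + M * (\<Sum>k\<in>S. \<bar>x$k - x0$k\<bar>)"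
        using b1 insert.IH unfolding y_def by simp
      also have "\<dots> = M * (\<Sum>k\<in>insert j S. \<bar>x$k - x0$k\<bar>)"
        using insert.hyps unfolding \<delta>_def by (simp add: algebra_simps)
      finally show ?case .
    qed
    from this[of UNIV] show ?thesis by (simp add: vec_eq_iff)
  qed
  define g where "g p = M * (\<Sum>k\<in>UNIV. \<bar>snd p $ k - x0$k\<bar>)" for p :: "real \<times> (real^'d)"
  have gc: "isCont g (c0, x0)" unfolding g_def by (intro continuous_intros)
  have gl: "(g \<longlongrightarrow> 0) (at (c0, x0))"
    using gc unfolding isCont_def g_def by simp
  have sc: "isCont (\<lambda>p. (\<Sum>k\<in>UNIV. \<bar>snd p $ k - x0$k\<bar>)) (c0, x0)" by (intro continuous_intros)
  have ev1: "\<forall>\<^sub>F p in at (c0, x0). (\<Sum>k\<in>UNIV. \<bar>snd p $ k - x0$k\<bar>) < d/2"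
    proof -
    have "((\<lambda>p. (\<Sum>k\<in>UNIV. \<bar>snd p $ k - x0$k\<bar>)) \<longlongrightarrow> 0) (at (c0, x0))"
      using sc unfolding isCont_def by simp
    from order_tendstoD(2)[OF this, of "d/2"] d show ?thesis by simp
  qed
  have fc: "isCont (\<lambda>p. fst p) (c0, x0)" by (intro continuous_intros)
  have ev2: "\<forall>\<^sub>F p in at (c0, x0). \<bar>fst p - c0\<bar> < d/2"
  proof -
    have "((\<lambda>p. fst p) \<longlongrightarrow> c0) (at (c0, x0))" using fc unfolding isCont_def by simp
    then have "\<forall>\<^sub>F p in at (c0, x0). dist (fst p) c0 < d/2" using d by (intro tendstoD) auto
    then show ?thesis by (simp add: dist_real_def)
  qed
  have p1: "((\<lambda>p. h (fst p) (snd p) - h (fst p) x0) \<longlongrightarrow> 0) (at (c0, x0))"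
  proof (rule Lim_null_comparison[OF _ gl])
    show "\<forall>\<^sub>F p in at (c0, x0). norm (h (fst p) (snd p) - h (fst p) x0) \<le> g p"
      using ev1 ev2 by eventually_elim (auto simp: g_def intro!: key)
  qed
  have p2: "isCont (\<lambda>p. h (fst p) x0) (c0, x0)"
    using isCont_o2[OF fc, of "\<lambda>c. h c x0"] hc[OF c0] by simp
  have "((\<lambda>p. (h (fst p) (snd p) - h (fst p) x0) + h (fst p) x0) \<longlongrightarrow> 0 + h c0 x0) (at (c0, x0))"
    using p1 p2 unfolding isCont_def by (intro tendsto_add) auto
  then show ?thesis unfolding isCont_def by simp
qed



locale one =
  fixes v d dd :: "real \<Rightarrow> real"
  assumes vd: "\<And>c. 0 < c \<Longrightarrow> (v has_real_derivative d c) (at c)"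
    and dd: "\<And>c. 0 < c \<Longrightarrow> (d has_real_derivative dd c) (at c)"
    and ddn: "\<And>c. 0 < c \<Longrightarrow> dd c < 0"
    and ddc: "continuous_on {0<..} dd"
    and d0: "filterlim d at_top (at_right 0)"
    and di: "(d \<longlongrightarrow> 0) at_top"
    and vcc: "strictly_concave_on {0<..} v"
begin

lemma dec: "0 < a \<Longrightarrow> a < b \<Longrightarrow> d b < d a"
proof (rule DERIV_neg_imp_decreasing[of a b d])
  fix x assume "0 < a" "a \<le> x" then have "0 < x" by simp
  then show "\<exists>y. (d has_real_derivative y) (at x) \<and> y < 0" using dd ddn by blast
qed

lemma decle: "0 < a \<Longrightarrow> a \<le> b \<Longrightarrow> d b \<le> d a"
  using dec by (cases "a = b") (auto simp: less_le)

lemma pos: "0 < c \<Longrightarrow> 0 < d c"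
proof (rule ccontr)
  assume c: "0 < c" and "\<not> 0 < d c"
  then have n: "d (c + 1) < 0" using dec[of c "c+1"] by simp
  have "\<forall>\<^sub>F y in at_top. d (c + 1) < d y" using order_tendstoD(1)[OF di n] .
  moreover have "\<forall>\<^sub>F y in at_top. c + 1 < y" by (rule eventually_gt_at_top)
  ultimately have "\<forall>\<^sub>F y in at_top. d (c + 1) < d y \<and> c + 1 < y" by (rule eventually_conj)
  then obtain N where "\<And>y. y \<ge> N \<Longrightarrow> d (c + 1) < d y \<and> c + 1 < y"
    unfolding eventually_at_top_linorder by blast
  then have "d (c + 1) < d (max N (c+2))" "c + 1 < max N (c+2)" by auto
  moreover have "d (max N (c+2)) < d (c + 1)" using dec[of "c+1" "max N (c+2)"] c by auto
  ultimately show False by simp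
qed

lemma dcont: "0 < c \<Longrightarrow> isCont d c"
  using DERIV_isCont[OF dd] .

lemma vcont: "0 < c \<Longrightarrow> isCont v c"
  using DERIV_isCont[OF vd] .

lemma ddcont: "0 < c \<Longrightarrow> isCont dd c"
  using ddc continuous_on_eq_continuous_at[of "{0<..}" dd] by auto

lemma mono: "0 < a \<Longrightarrow> a < b \<Longrightarrow> v a < v b"
proof (rule DERIV_pos_imp_increasing[of a b v])
  fix x assume "0 < a" "a \<le> x" then have "0 < x" by simp
  then show "\<exists>y. (v has_real_derivative y) (at x) \<and> 0 < y" using vd pos by blast
qed

lemma monole: "0 < a \<Longrightarrow> a \<le> b \<Longrightarrow> v a \<le> v b"
  using mono by (cases "a = b") (auto simp: less_le)

lemma tangent: assumes "0 < a" "0 < b" shows "v a \<le> v b + d b * (a - b)"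
proof (cases a b rule: linorder_cases)
  case less
  then obtain z where z: "a < z" "z < b" "v b - v a = (b - a) * d z"
    using MVT2[of a b v d] vd assms by force
  have "d b < d z" using dec[of z b] z assms by simp
  then have "(b - a) * d b \<le> (b - a) * d z" using less by simp
  then show ?thesis using z by (simp add: algebra_simps)
next
  case equal then show ?thesis by simp
next
  case greater
  then obtain z where z: "b < z" "z < a" "v a - v b = (a - b) * d z"
    using MVT2[of b a v d] vd assms by force
  have "d z < d b" using dec[of b z] z assms by simp
  then have "(a - b) * d z \<le> (a - b) * d b" using greater by simp
  then show ?thesis using z by (simp add: algebra_simps)
qed

lemma d_refl: "0 < s - b \<Longrightarrow> ((\<lambda>b. d (s - b)) has_real_derivative - dd (s - b)) (at b)"
proof -
  assume a: "0 < s - b"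
  have "((\<lambda>b. s - b) has_real_derivative -1) (at b)" by (auto intro!: derivative_eq_intros)
  from DERIV_chain2[OF dd[OF a] this] show ?thesis by simp
qed

lemma d_shift: "0 < s - k \<Longrightarrow> ((\<lambda>s. d (s - k)) has_real_derivative dd (s - k)) (at s)"
proof -
  assume a: "0 < s - k"
  have "((\<lambda>s. s - k) has_real_derivative 1) (at s)" by (auto intro!: derivative_eq_intros)
  from DERIV_chain2[OF dd[OF a] this] show ?thesis by simp
qed

lemma dcont_shift: "0 < s - k \<Longrightarrow> isCont (\<lambda>s. d (s - k)) s"
  using DERIV_isCont[OF d_shift] .

lemma concave_le:
  assumes "0 < a" "0 < b" "0 < \<theta>" "\<theta> < 1"
  shows "\<theta> * v a + (1 - \<theta>) * v b \<le> v (\<theta> * a + (1 - \<theta>) * b)"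
proof (cases "a = b")
  case True then show ?thesis by (simp add: algebra_simps)
next
  case False then show ?thesis using vcc assms unfolding strictly_concave_on_def by fastforce
qed

end



definition zr :: "(real \<Rightarrow> real) \<Rightarrow> (real \<Rightarrow> real) \<Rightarrow> real \<Rightarrow> real" where
  "zr d1 d2 c = (THE a. 0 < a \<and> a < c \<and> d1 a = d2 (c - a))"

definition sc :: "(real \<Rightarrow> real) \<Rightarrow> (real \<Rightarrow> real) \<Rightarrow> real \<Rightarrow> real" where
  "sc v1 v2 c = Sup {v1 c1 + v2 c2 | c1 c2. c1 > 0 \<and> c2 > 0 \<and> c1 + c2 = c}"

locale oned = o1: one v1 d1 dd1 + o2: one v2 d2 dd2
  for v1 d1 dd1 v2 d2 dd2 :: "real \<Rightarrow> real"
begin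

lemma root_ex:
  assumes c: "0 < c"
  shows "\<exists>a. 0 < a \<and> a < c \<and> d1 a = d2 (c - a)"
proof -
  have "\<forall>\<^sub>F a in at_right 0. d2 (c/2) < d1 a"
    using o1.d0 unfolding filterlim_at_top_dense by blast
  then obtain b1 where b1: "b1 > 0" "\<And>a. 0 < a \<Longrightarrow> a < b1 \<Longrightarrow> d2 (c/2) < d1 a"
    unfolding eventually_at_right_field by auto
  define a1 where "a1 = min (b1/2) (c/4)"
  have a1: "0 < a1" "a1 < c/2" "d2 (c/2) < d1 a1" using b1 c by (auto simp: a1_def)
  have "d2 (c - a1) \<le> d2 (c/2)" using a1 by (intro o2.decle) auto
  with a1 have p1: "d2 (c - a1) - d1 a1 < 0" by simp
  have "\<forall>\<^sub>F a in at_right 0. d1 (c/2) < d2 a"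
    using o2.d0 unfolding filterlim_at_top_dense by blast
  then obtain b2 where b2: "b2 > 0" "\<And>a. 0 < a \<Longrightarrow> a < b2 \<Longrightarrow> d1 (c/2) < d2 a"
    unfolding eventually_at_right_field by auto
  define a2 where "a2 = c - min (b2/2) (c/4)"
  have a2: "c/2 < a2" "a2 < c" "d1 (c/2) < d2 (c - a2)" using b2 c by (auto simp: a2_def)
  have "d1 a2 \<le> d1 (c/2)" using a2 c by (intro o1.decle) auto
  with a2 have p2: "0 < d2 (c - a2) - d1 a2" by simp
  have "continuous_on {a1..a2} (\<lambda>a. d2 (c - a) - d1 a)"
  proof (intro continuous_at_imp_continuous_on ballI)
    fix a assume "a \<in> {a1..a2}"
    then have a: "0 < a" "a < c" using a1 a2 by auto
    have "isCont (\<lambda>a. d2 (c - a)) a"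
    proof -
      have "isCont (\<lambda>a. c - a) a" by (intro continuous_intros)
      from isCont_o2[OF this o2.dcont] a show ?thesis by simp
    qed
    then show "isCont (\<lambda>a. d2 (c - a) - d1 a) a" using o1.dcont[of a] a by (intro continuous_intros)
  qed
  then obtain a where a: "a1 \<le> a" "a \<le> a2" "d2 (c - a) - d1 a = 0"
    using IVT'[of "\<lambda>a. d2 (c - a) - d1 a" a1 0 a2] p1 p2 a1 a2 by auto
  then show ?thesis using a1 a2 by (intro exI[of _ a]) auto
qed

lemma root_uniq:
  assumes "0 < a" "a < c" "d1 a = d2 (c - a)" "0 < b" "b < c" "d1 b = d2 (c - b)"
  shows "a = b"
proof (rule ccontr)
  assume "a \<noteq> b"
  then consider "a < b" | "b < a" by linarith
  then show False
  proof cases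
    case 1
    have "d1 b < d1 a" using 1 assms by (intro o1.dec) auto
    moreover have "d2 (c - a) < d2 (c - b)" using 1 assms by (intro o2.dec) auto
    ultimately show False using assms by simp
  next
    case 2
    have "d1 a < d1 b" using 2 assms by (intro o1.dec) auto
    moreover have "d2 (c - b) < d2 (c - a)" using 2 assms by (intro o2.dec) auto
    ultimately show False using assms by simp
  qed
qed

lemma root:
  assumes "0 < c"
  shows "0 < zr d1 d2 c \<and> zr d1 d2 c < c \<and> d1 (zr d1 d2 c) = d2 (c - zr d1 d2 c)"
proof -
  have "\<exists>!a. 0 < a \<and> a < c \<and> d1 a = d2 (c - a)"
    using root_ex[OF assms] root_uniq by blast
  then show ?thesis unfolding zr_def by (rule theI')
qed

lemma root_eq:
  assumes "0 < a" "a < c" "d1 a = d2 (c - a)"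
  shows "a = zr d1 d2 c"
  using root[of c] assms root_uniq[of a c "zr d1 d2 c"] by auto

lemma sc_bound:
  assumes "0 < a" "a < c"
  shows "v1 a + v2 (c - a) \<le> v1 (zr d1 d2 c) + v2 (c - zr d1 d2 c)"
proof -
  define f where "f = zr d1 d2 c"
  have f: "0 < f" "f < c" "d1 f = d2 (c - f)" using root[of c] assms unfolding f_def by auto
  have "v1 a \<le> v1 f + d1 f * (a - f)" using assms f by (intro o1.tangent) auto
  moreover have "v2 (c - a) \<le> v2 (c - f) + d2 (c - f) * ((c - a) - (c - f))" using assms f by (intro o2.tangent) auto
  ultimately show ?thesis using f(3) unfolding f_def[symmetric] by (simp add: algebra_simps)
qed

lemma sc_eq:
  assumes "0 < c"
  shows "sc v1 v2 c = v1 (zr d1 d2 c) + v2 (c - zr d1 d2 c)"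
  unfolding sc_def
proof (rule cSup_eq_maximum)
  show "v1 (zr d1 d2 c) + v2 (c - zr d1 d2 c) \<in> {v1 c1 + v2 c2 |c1 c2. 0 < c1 \<and> 0 < c2 \<and> c1 + c2 = c}"
    using root[OF assms] by force
next
  fix x assume "x \<in> {v1 c1 + v2 c2 |c1 c2. 0 < c1 \<and> 0 < c2 \<and> c1 + c2 = c}"
  then obtain c1 c2 where "x = v1 c1 + v2 c2" "0 < c1" "0 < c2" "c1 + c2 = c" by blast
  then show "x \<le> v1 (zr d1 d2 c) + v2 (c - zr d1 d2 c)"
    using sc_bound[of c1 c] by (simp add: eq_diff_eq[symmetric])
qed

lemma sc_ge:
  assumes "0 < a" "a < c"
  shows "v1 a + v2 (c - a) \<le> sc v1 v2 c"
  using sc_bound[OF assms] sc_eq[of c] assms by simp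

lemma F_cont:
  assumes c0: "0 < c0"
  shows "isCont (zr d1 d2) c0"
proof -
  define f0 where "f0 = zr d1 d2 c0"
  have f0: "0 < f0" "f0 < c0" "d1 f0 = d2 (c0 - f0)" using root[OF c0] unfolding f0_def by auto
  define e0 where "e0 = min f0 (c0 - f0) / 2"
  have e0: "0 < e0" "e0 < f0" "2 * e0 \<le> c0 - f0" using f0 by (auto simp: e0_def)
  have "(zr d1 d2 \<longlongrightarrow> f0) (at c0)"
  proof (rule root_tendsto[where \<psi>="\<lambda>c a. d1 a - d2 (c - a)" and hi="\<lambda>c. c", OF e0(1,2)])
    fix \<epsilon> :: real assume \<epsilon>: "0 < \<epsilon>" "\<epsilon> < e0"
    have A: "0 < d1 (f0 - \<epsilon>) - d2 (c0 - (f0 - \<epsilon>))"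
    proof -
      have "d1 f0 < d1 (f0 - \<epsilon>)" using \<epsilon> e0 by (intro o1.dec) auto
      moreover have "d2 (c0 - (f0 - \<epsilon>)) < d2 (c0 - f0)" using \<epsilon> e0 f0 by (intro o2.dec) auto
      ultimately show ?thesis using f0 by simp
    qed
    have B: "d1 (f0 + \<epsilon>) - d2 (c0 - (f0 + \<epsilon>)) < 0"
    proof -
      have "d1 (f0 + \<epsilon>) < d1 f0" using \<epsilon> e0 f0 by (intro o1.dec) auto
      moreover have "d2 (c0 - f0) < d2 (c0 - (f0 + \<epsilon>))" using \<epsilon> e0 f0 by (intro o2.dec) auto
      ultimately show ?thesis using f0 by simp
    qed
    have cA: "isCont (\<lambda>c. d1 (f0 - \<epsilon>) - d2 (c - (f0 - \<epsilon>))) c0"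
      using o2.dcont_shift[of c0 "f0 - \<epsilon>"] \<epsilon> e0 f0 by (intro continuous_intros) auto
    have cB: "isCont (\<lambda>c. d1 (f0 + \<epsilon>) - d2 (c - (f0 + \<epsilon>))) c0"
      using o2.dcont_shift[of c0 "f0 + \<epsilon>"] \<epsilon> e0 f0 by (intro continuous_intros) auto
    have evA: "\<forall>\<^sub>F c in at c0. 0 < d1 (f0 - \<epsilon>) - d2 (c - (f0 - \<epsilon>))"
      using order_tendstoD(1)[OF cA[unfolded isCont_def] A] .
    have evB: "\<forall>\<^sub>F c in at c0. d1 (f0 + \<epsilon>) - d2 (c - (f0 + \<epsilon>)) < 0"
      using order_tendstoD(2)[OF cB[unfolded isCont_def] B] .
    have evC: "\<forall>\<^sub>F c in at c0. f0 + \<epsilon> < c"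
      using order_tendstoD(1)[OF tendsto_ident_at, of "f0 + \<epsilon>" c0 UNIV] \<epsilon> e0 by simp
    show "\<forall>\<^sub>F c in at c0. 0 < d1 (f0 - \<epsilon>) - d2 (c - (f0 - \<epsilon>)) \<and>
          d1 (f0 + \<epsilon>) - d2 (c - (f0 + \<epsilon>)) < 0 \<and> f0 + \<epsilon> < c"
      using evA evB evC by eventually_elim auto
  next
    have evC: "\<forall>\<^sub>F c in at c0. 0 < c"
      using order_tendstoD(1)[OF tendsto_ident_at, of 0 c0 UNIV] c0 by simp
    then show "\<forall>\<^sub>F c in at c0. 0 < zr d1 d2 c \<and> zr d1 d2 c < c \<and> d1 (zr d1 d2 c) - d2 (c - zr d1 d2 c) = 0 \<and>
       (\<forall>a b. 0 < a \<longrightarrow> a < b \<longrightarrow> b < c \<longrightarrow> d1 b - d2 (c - b) < d1 a - d2 (c - a))"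
    proof eventually_elim
      case (elim c)
      have m: "d1 b - d2 (c - b) < d1 a - d2 (c - a)" if "0 < a" "a < b" "b < c" for a b
      proof -
        have "d1 b < d1 a" using that by (intro o1.dec) auto
        moreover have "d2 (c - a) < d2 (c - b)" using that by (intro o2.dec) auto
        ultimately show ?thesis by simp
      qed
      show ?case using root[OF elim] m by auto
    qed
  qed
  then show ?thesis unfolding isCont_def f0_def .
qed

lemma F_deriv:
  assumes c0: "0 < c0"
  shows "(zr d1 d2 has_real_derivative
     dd2 (c0 - zr d1 d2 c0) / (dd1 (zr d1 d2 c0) + dd2 (c0 - zr d1 d2 c0))) (at c0)"
proof -
  define f0 where "f0 = zr d1 d2 c0"
  have f0: "0 < f0" "f0 < c0" "d1 f0 = d2 (c0 - f0)" using root[OF c0] unfolding f0_def by auto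
  define r where "r = min f0 (c0 - f0) / 2"
  have r: "0 < r" "r < f0" "2 * r \<le> c0 - f0" using f0 by (auto simp: r_def)
  have "(zr d1 d2 has_real_derivative - (- dd2 (c0 - f0)) / (dd1 f0 + dd2 (c0 - f0))) (at c0)"
  proof (rule ift[where G="\<lambda>b s. d1 b - d2 (s - b)" and Ga="\<lambda>b s. dd1 b + dd2 (s - b)", OF r(1)])
    fix b s :: real assume bs: "\<bar>b - f0\<bar> < r" "\<bar>s - c0\<bar> < r"
    then have "0 < b" "0 < s - b" using r by auto
    from DERIV_diff[OF o1.dd[OF this(1)] o2.d_refl[OF this(2)]]
    show "((\<lambda>b. d1 b - d2 (s - b)) has_real_derivative dd1 b + dd2 (s - b)) (at b)" by simp
  next
    have i1: "isCont (\<lambda>p. dd1 (fst p)) (f0, c0)"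
    proof -
      have "isCont (\<lambda>p::real\<times>real. fst p) (f0, c0)" by (intro continuous_intros)
      from isCont_o2[OF this o1.ddcont] f0 show ?thesis by simp
    qed
    have i2: "isCont (\<lambda>p::real\<times>real. dd2 (snd p - fst p)) (f0, c0)"
    proof -
      have "isCont (\<lambda>p::real\<times>real. snd p - fst p) (f0, c0)" by (intro continuous_intros)
      from isCont_o2[OF this o2.ddcont] f0 show ?thesis by simp
    qed
    show "isCont (\<lambda>p. dd1 (fst p) + dd2 (snd p - fst p)) (f0, c0)" using i1 i2 by (intro continuous_intros)
  next
    show "(zr d1 d2 \<longlongrightarrow> f0) (at c0)" using F_cont[OF c0] unfolding isCont_def f0_def .
  next
    show "zr d1 d2 c0 = f0" by (simp add: f0_def)
  next
    show "\<forall>\<^sub>F s in at c0. d1 (zr d1 d2 s) - d2 (s - zr d1 d2 s) = 0"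
      using order_tendstoD(1)[OF tendsto_ident_at, of 0 c0 UNIV] c0
      by (auto elim!: eventually_mono dest: root)
  next
    show "d1 f0 - d2 (c0 - f0) = 0" using f0 by simp
  next
    have "((\<lambda>s. d1 f0 - d2 (s - f0)) has_real_derivative 0 - dd2 (c0 - f0)) (at c0)"
      using f0 by (intro DERIV_diff DERIV_const o2.d_shift) auto
    then show "((\<lambda>s. d1 f0 - d2 (s - f0)) has_real_derivative - dd2 (c0 - f0)) (at c0)" by simp
  next
    show "dd1 f0 + dd2 (c0 - f0) \<noteq> 0" using o1.ddn[of f0] o2.ddn[of "c0 - f0"] f0 by simp
  qed
  then show ?thesis unfolding f0_def by simp
qed

lemma h_deriv:
  assumes c0: "0 < c0"
  shows "(sc v1 v2 has_real_derivative d1 (zr d1 d2 c0)) (at c0)"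
proof -
  define f0 where "f0 = zr d1 d2 c0"
  define F' where "F' = dd2 (c0 - f0) / (dd1 f0 + dd2 (c0 - f0))"
  have f0: "0 < f0" "f0 < c0" "d1 f0 = d2 (c0 - f0)" using root[OF c0] unfolding f0_def by auto
  have Fd: "(zr d1 d2 has_real_derivative F') (at c0)" using F_deriv[OF c0] unfolding F'_def f0_def .
  have a: "((\<lambda>c. v1 (zr d1 d2 c)) has_real_derivative d1 f0 * F') (at c0)"
    using DERIV_chain2[OF o1.vd Fd] f0 unfolding f0_def by simp
  have "((\<lambda>c. c - zr d1 d2 c) has_real_derivative 1 - F') (at c0)"
    by (intro DERIV_diff DERIV_ident Fd)
  moreover have "(v2 has_real_derivative d2 (c0 - f0)) (at ((\<lambda>c. c - zr d1 d2 c) c0))"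
    using o2.vd f0 unfolding f0_def by simp
  ultimately have b: "((\<lambda>c. v2 (c - zr d1 d2 c)) has_real_derivative d2 (c0 - f0) * (1 - F')) (at c0)"
    using DERIV_chain2[where f=v2 and g="\<lambda>c. c - zr d1 d2 c" and x=c0 and s=UNIV] by simp
  have "((\<lambda>c. v1 (zr d1 d2 c) + v2 (c - zr d1 d2 c)) has_real_derivative d1 f0 * F' + d2 (c0 - f0) * (1 - F')) (at c0)"
    by (rule DERIV_add[OF a b])
  then have "((\<lambda>c. v1 (zr d1 d2 c) + v2 (c - zr d1 d2 c)) has_real_derivative d1 f0) (at c0)"
    using f0 by (simp add: algebra_simps)
  then show ?thesis unfolding f0_def
    by (rule has_field_derivative_transform_within_open[where S="{0<..}"]) (use c0 sc_eq in auto)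
qed

lemma h_deriv_eq: "0 < c \<Longrightarrow> deriv (sc v1 v2) c = d1 (zr d1 d2 c)"
  by (rule DERIV_imp_deriv) (rule h_deriv)

lemma dF_deriv:
  assumes c0: "0 < c0"
  shows "((\<lambda>c. d1 (zr d1 d2 c)) has_real_derivative
     dd1 (zr d1 d2 c0) * (dd2 (c0 - zr d1 d2 c0) / (dd1 (zr d1 d2 c0) + dd2 (c0 - zr d1 d2 c0)))) (at c0)"
  using DERIV_chain2[OF o1.dd F_deriv[OF c0]] root[OF c0] by simp

lemma sc_upper: "0 < c \<Longrightarrow> sc v1 v2 c \<le> v1 c + v2 c"
  using sc_eq[of c] root[of c] o1.monole[of "zr d1 d2 c" c] o2.monole[of "c - zr d1 d2 c" c] by simp

lemma sc_lower: "0 < c \<Longrightarrow> v1 (c/2) + v2 (c/2) \<le> sc v1 v2 c"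
  using sc_ge[of "c/2" c] by simp

lemma h_inada: "inada (sc v1 v2)"
  unfolding inada_def
proof (intro conjI)
  show "strictly_concave_on {0<..} (sc v1 v2)"
    unfolding strictly_concave_on_def
  proof (intro ballI allI impI)
    fix a b \<theta> :: real assume a: "a \<in> {0<..}" and b: "b \<in> {0<..}" and ab: "a \<noteq> b" and \<theta>: "0 < \<theta>" "\<theta> < 1"
    define fa where "fa = zr d1 d2 a"
    define fb where "fb = zr d1 d2 b"
    have fa: "0 < fa" "fa < a" using root[of a] a unfolding fa_def by auto
    have fb: "0 < fb" "fb < b" using root[of b] b unfolding fb_def by auto
    define m where "m = \<theta> * a + (1 - \<theta>) * b"
    define c1 where "c1 = \<theta> * fa + (1 - \<theta>) * fb"
    have c1: "0 < c1" "c1 < m"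
      using \<theta> fa fb unfolding c1_def m_def
      by (smt (verit) mult_pos_pos mult_strict_left_mono)+
    have m_c1: "m - c1 = \<theta> * (a - fa) + (1 - \<theta>) * (b - fb)" unfolding m_def c1_def by (simp add: algebra_simps)
    have i1: "\<theta> * v1 fa + (1 - \<theta>) * v1 fb \<le> v1 c1"
      unfolding c1_def using fa fb \<theta> by (intro o1.concave_le) auto
    have i2: "\<theta> * v2 (a - fa) + (1 - \<theta>) * v2 (b - fb) \<le> v2 (m - c1)"
      unfolding m_c1 using fa fb \<theta> by (intro o2.concave_le) auto
    have strict: "\<theta> * v1 fa + (1 - \<theta>) * v1 fb < v1 c1 \<or> \<theta> * v2 (a - fa) + (1 - \<theta>) * v2 (b - fb) < v2 (m - c1)"
    proof (cases "fa = fb")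
      case True
      then have "a - fa \<noteq> b - fb" using ab by simp
      then show ?thesis using o2.vcc fa fb \<theta> unfolding strictly_concave_on_def m_c1 by auto
    next
      case False
      then show ?thesis using o1.vcc fa fb \<theta> unfolding strictly_concave_on_def c1_def by auto
    qed
    have "\<theta> * sc v1 v2 a + (1 - \<theta>) * sc v1 v2 b
        = (\<theta> * v1 fa + (1 - \<theta>) * v1 fb) + (\<theta> * v2 (a - fa) + (1 - \<theta>) * v2 (b - fb))"
      using sc_eq[of a] sc_eq[of b] a b unfolding fa_def fb_def by (simp add: algebra_simps)
    also have "\<dots> < v1 c1 + v2 (m - c1)" using i1 i2 strict by linarith
    also have "\<dots> \<le> sc v1 v2 m" using c1 by (rule sc_ge)
    finally show "\<theta> * sc v1 v2 a + (1 - \<theta>) * sc v1 v2 b < sc v1 v2 (\<theta> * a + (1 - \<theta>) * b)"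
      unfolding m_def .
  qed
next
  show "strict_mono_on {0<..} (sc v1 v2)"
  proof (rule strict_mono_onI)
    fix a b :: real assume a: "a \<in> {0<..}" and b: "b \<in> {0<..}" and ab: "a < b"
    define fa where "fa = zr d1 d2 a"
    have fa: "0 < fa" "fa < a" using root[of a] a unfolding fa_def by auto
    have "sc v1 v2 a = v1 fa + v2 (a - fa)" using sc_eq[of a] a unfolding fa_def by simp
    also have "\<dots> < v1 fa + v2 (b - fa)" using o2.mono[of "a - fa" "b - fa"] fa ab by simp
    also have "\<dots> \<le> sc v1 v2 b" using sc_ge[of fa b] fa ab by simp
    finally show "sc v1 v2 a < sc v1 v2 b" .
  qed
next
  show "\<forall>c>0. sc v1 v2 differentiable at c"
    using h_deriv real_differentiable_def by blast
next
  have "isCont (deriv (sc v1 v2)) c" if c: "0 < c" for c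
  proof -
    have "\<forall>\<^sub>F y in nhds c. deriv (sc v1 v2) y = d1 (zr d1 d2 y)"
      unfolding eventually_nhds using c h_deriv_eq by (intro exI[of _ "{0<..}"]) auto
    moreover have "isCont (\<lambda>y. d1 (zr d1 d2 y)) c"
      using isCont_o2[OF F_cont[OF c] o1.dcont] root[OF c] by simp
    ultimately show ?thesis using isCont_cong[of "deriv (sc v1 v2)" "\<lambda>y. d1 (zr d1 d2 y)" c] by simp
  qed
  then show "continuous_on {0<..} (deriv (sc v1 v2))"
    by (intro continuous_at_imp_continuous_on) auto
next
  show "filterlim (deriv (sc v1 v2)) at_top (at_right 0)"
  proof (rule filterlim_at_top_mono[OF o1.d0])
    show "\<forall>\<^sub>F x in at_right 0. d1 x \<le> deriv (sc v1 v2) x"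
      using eventually_at_right_less[of "0::real"]
    proof eventually_elim
      case (elim x)
      then show ?case using h_deriv_eq[OF elim] root[OF elim] o1.decle[of "zr d1 d2 x" x] by simp
    qed
  qed
next
  have half: "filterlim (\<lambda>c::real. c / 2) at_top at_top"
    unfolding filterlim_at_top
  proof
    fix Z :: real
    show "\<forall>\<^sub>F x in at_top. Z \<le> x / 2" using eventually_ge_at_top[of "2 * Z"] by eventually_elim auto
  qed
  have l1: "((\<lambda>c. d1 (c/2)) \<longlongrightarrow> 0) at_top" by (rule filterlim_compose[OF o1.di half])
  have l2: "((\<lambda>c. d2 (c/2)) \<longlongrightarrow> 0) at_top" by (rule filterlim_compose[OF o2.di half])
  show "(deriv (sc v1 v2) \<longlongrightarrow> 0) at_top"
  proof (rule tendsto_sandwich[where f="\<lambda>_. 0" and h="\<lambda>c. d1 (c/2) + d2 (c/2)"])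
    show "\<forall>\<^sub>F n in at_top. 0 \<le> deriv (sc v1 v2) n"
      using eventually_gt_at_top[of "0::real"]
      by eventually_elim (use h_deriv_eq root o1.pos in \<open>fastforce\<close>)
    show "\<forall>\<^sub>F n in at_top. deriv (sc v1 v2) n \<le> d1 (n/2) + d2 (n/2)"
      using eventually_gt_at_top[of "0::real"]
    proof eventually_elim
      case (elim c)
      define f where "f = zr d1 d2 c"
      have f: "0 < f" "f < c" "d1 f = d2 (c - f)" using root[OF elim] unfolding f_def by auto
      have "d1 f \<le> d1 (c/2) + d2 (c/2)"
      proof (cases "c/2 \<le> f")
        case True
        then have "d1 f \<le> d1 (c/2)" using elim by (intro o1.decle) auto
        then show ?thesis using o2.pos[of "c/2"] elim by simp
      next
        case False
        then have "d2 (c - f) \<le> d2 (c/2)" using elim by (intro o2.decle) auto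
        then show ?thesis using o1.pos[of "c/2"] elim f by simp
      qed
      then show ?case using h_deriv_eq[OF elim] unfolding f_def by simp
    qed
    show "((\<lambda>_. 0) \<longlongrightarrow> (0::real)) at_top" by simp
    show "((\<lambda>c. d1 (c/2) + d2 (c/2)) \<longlongrightarrow> 0) at_top" using tendsto_add[OF l1 l2] by simp
  qed
qed

lemma sc_rat:
  assumes c: "0 < c"
  shows "sc v1 v2 c = (SUP q\<in>\<rat>. (if 0 < q \<and> q < c then v1 q + v2 (c - q) else v1 (c/2) + v2 (c/2)))"
    (is "_ = (SUP q\<in>\<rat>. ?w q)")
proof -
  have wle: "?w q \<le> sc v1 v2 c" for q
    using sc_ge[of q c] sc_lower[OF c] by auto
  have bdd: "bdd_above (?w ` \<rat>)" unfolding bdd_above_def using wle by (intro exI[of _ "sc v1 v2 c"]) blast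
  have "sc v1 v2 c \<le> (SUP q\<in>\<rat>. ?w q) + e" if e: "0 < e" for e
  proof -
    define f where "f = zr d1 d2 c"
    have f: "0 < f" "f < c" using root[OF c] unfolding f_def by auto
    have ic: "isCont (\<lambda>q. v1 q + v2 (c - q)) f"
    proof -
      have "isCont (\<lambda>q. c - q) f" by (intro continuous_intros)
      from isCont_o2[OF this o2.vcont] f have "isCont (\<lambda>q. v2 (c - q)) f" by simp
      then show ?thesis using o1.vcont[OF f(1)] by (intro continuous_intros)
    qed
    then obtain \<delta> where \<delta>: "\<delta> > 0" "\<And>q. dist q f < \<delta> \<Longrightarrow> dist (v1 q + v2 (c - q)) (v1 f + v2 (c - f)) < e"
      unfolding continuous_at_eps_delta using e by blast
    define \<delta>' where "\<delta>' = min \<delta> (min f (c - f))"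
    have \<delta>': "0 < \<delta>'" "\<delta>' \<le> \<delta>" "\<delta>' \<le> f" "\<delta>' \<le> c - f" using \<delta> f by (auto simp: \<delta>'_def)
    obtain q where q: "q \<in> \<rat>" "f - \<delta>' < q" "q < f + \<delta>'"
      using Rats_dense_in_real[of "f - \<delta>'" "f + \<delta>'"] \<delta>' by auto
    have q0: "0 < q" "q < c" using q \<delta>' by auto
    have "dist q f < \<delta>" using q \<delta>' by (simp add: dist_real_def abs_less_iff)
    then have "v1 f + v2 (c - f) < v1 q + v2 (c - q) + e" using \<delta>(2)[of q] by (simp add: dist_real_def abs_less_iff)
    also have "v1 q + v2 (c - q) = ?w q" using q0 by simp
    also have "?w q \<le> (SUP q\<in>\<rat>. ?w q)" by (rule cSUP_upper[OF q(1) bdd])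
    finally show ?thesis using sc_eq[OF c] unfolding f_def by simp
  qed
  then have "sc v1 v2 c \<le> (SUP q\<in>\<rat>. ?w q)" by (rule field_le_epsilon)
  moreover have "(SUP q\<in>\<rat>. ?w q) \<le> sc v1 v2 c"
    by (rule cSUP_least) (use wle Rats_0 in auto)
  ultimately show ?thesis by simp
qed

end



lemma isCont2:
  fixes G :: "'a::metric_space \<Rightarrow> 'b::metric_space \<Rightarrow> 'c::metric_space" and p0 :: "'e::metric_space"
  assumes "isCont (\<lambda>q. G (fst q) (snd q)) (\<alpha> p0, \<beta> p0)" "isCont \<alpha> p0" "isCont \<beta> p0"
  shows "isCont (\<lambda>p. G (\<alpha> p) (\<beta> p)) p0"
proof -
  have "isCont (\<lambda>p. (\<alpha> p, \<beta> p)) p0" using assms(2,3) by (intro continuous_intros)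
  from isCont_o2[OF this assms(1)] show ?thesis by simp
qed

lemma open_dom: "open ({0::real<..} \<times> (UNIV :: (real^'d) set))"
  by (rule open_Times[OF open_greaterThan open_UNIV])

lemma cont_on_isCont:
  fixes g :: "real \<Rightarrow> real^'d \<Rightarrow> real"
  assumes "continuous_on ({0<..} \<times> UNIV) (\<lambda>(c, x). g c x)" "0 < c0"
  shows "isCont (\<lambda>p. g (fst p) (snd p)) (c0, x0)"
proof -
  have "isCont (\<lambda>(c, x). g c x) (c0, x0)"
    using assms continuous_on_eq_continuous_at[OF open_dom, of "\<lambda>(c, x). g c x"] by auto
  then show ?thesis by (simp add: case_prod_beta')
qed

lemma u_c_fun: "(\<lambda>c. u_c u t c x) = deriv (\<lambda>c. u t c x)"
  by (rule ext) (simp add: u_c_def)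

lemma U2_inada: "u \<in> U2 \<Longrightarrow> t \<in> {0..1} \<Longrightarrow> inada (\<lambda>c. u t c x)"
  unfolding U2_def U1_def by auto

lemma U2_vd: assumes "u \<in> U2" "t \<in> {0..1}" "0 < c"
  shows "((\<lambda>c. u t c x) has_real_derivative u_c u t c x) (at c)"
proof -
  have "(\<lambda>c. u t c x) differentiable at c" using U2_inada[OF assms(1,2), of x] assms(3) unfolding inada_def by auto
  then show ?thesis unfolding u_c_def by (simp add: DERIV_deriv_iff_real_differentiable)
qed

lemma U2_dd: assumes "u \<in> U2" "t \<in> {0..1}" "0 < c"
  shows "((\<lambda>c. u_c u t c x) has_real_derivative u_cc u t c x) (at c)"
proof -
  have "(\<lambda>c. u_c u t c x) differentiable at c" using assms unfolding U2_def by auto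
  then show ?thesis unfolding u_cc_def by (simp add: DERIV_deriv_iff_real_differentiable)
qed

lemma U2_dx: assumes "u \<in> U2" "t \<in> {0..1}" "0 < c"
  shows "((\<lambda>s. u_c u t c (x + s *\<^sub>R axis i 1)) has_real_derivative u_cx u i t c x) (at 0)"
proof -
  have "(\<lambda>s. u_c u t c (x + s *\<^sub>R axis i 1)) differentiable at 0" using assms unfolding U2_def by auto
  then show ?thesis unfolding u_cx_def by (simp add: DERIV_deriv_iff_real_differentiable)
qed

lemma U2_ccneg: "u \<in> U2 \<Longrightarrow> t \<in> {0..1} \<Longrightarrow> 0 < c \<Longrightarrow> u_cc u t c x < 0"
  unfolding U2_def by auto

lemma U2_cc_cont: "u \<in> U2 \<Longrightarrow> t \<in> {0..1} \<Longrightarrow> continuous_on ({0<..} \<times> UNIV) (\<lambda>(c, x). u_cc u t c x)"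
  unfolding U2_def by auto

lemma U2_cx_cont: "u \<in> U2 \<Longrightarrow> t \<in> {0..1} \<Longrightarrow> continuous_on ({0<..} \<times> UNIV) (\<lambda>(c, x). u_cx u i t c x)"
  unfolding U2_def by auto

lemma U2_one:
  assumes u: "u \<in> U2" and t: "t \<in> {0..1}"
  shows "one (\<lambda>c. u t c x) (\<lambda>c. u_c u t c x) (\<lambda>c. u_cc u t c x)"
proof
  fix c :: real assume "0 < c"
  then show "((\<lambda>c. u t c x) has_real_derivative u_c u t c x) (at c)"
    "((\<lambda>c. u_c u t c x) has_real_derivative u_cc u t c x) (at c)" "u_cc u t c x < 0"
    using U2_vd[OF u t] U2_dd[OF u t] U2_ccneg[OF u t] by auto
next
  show "continuous_on {0<..} (\<lambda>c. u_cc u t c x)"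
  proof (rule continuous_on_compose2[OF U2_cc_cont[OF u t], of _ "\<lambda>c. (c, x)", simplified])
    show "continuous_on {0<..} (\<lambda>c. (c, x))" by (intro continuous_intros)
  qed auto
next
  have i: "inada (\<lambda>c. u t c x)" by (rule U2_inada[OF u t])
  then show "filterlim (\<lambda>c. u_c u t c x) at_top (at_right 0)" "((\<lambda>c. u_c u t c x) \<longlongrightarrow> 0) at_top"
    "strictly_concave_on {0<..} (\<lambda>c. u t c x)"
    unfolding inada_def u_c_fun by auto
qed

lemma U2_uc_joint:
  assumes u: "u \<in> U2" and t: "t \<in> {0..1}" and c0: "0 < c0"
  shows "isCont (\<lambda>p. u_c u t (fst p) (snd p)) (c0, x0)"
proof (rule joint_cont[where hx="\<lambda>i c x. u_cx u i t c x", OF _ _ _ c0])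
  fix c x assume "0 < (c::real)"
  then show "isCont (\<lambda>c. u_c u t c x) c" using DERIV_isCont[OF U2_dd[OF u t]] by blast
next
  fix c x i assume "0 < (c::real)"
  then show "((\<lambda>s. u_c u t c (x + s *\<^sub>R axis i 1)) has_real_derivative u_cx u i t c x) (at 0)"
    by (rule U2_dx[OF u t])
next
  fix i show "continuous_on ({0<..} \<times> UNIV) (\<lambda>(c, x). u_cx u i t c x)" by (rule U2_cx_cont[OF u t])
qed



locale pair =
  fixes u1 u2 :: "real \<Rightarrow> real \<Rightarrow> real^'d \<Rightarrow> real"
  assumes A1: "u1 \<in> U2" and A2: "u2 \<in> U2"
begin

abbreviation Fz where "Fz t c x \<equiv> zr (\<lambda>a. u_c u1 t a x) (\<lambda>a. u_c u2 t a x) c"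

lemma od: "t \<in> {0..1} \<Longrightarrow> oned (\<lambda>c. u1 t c x) (\<lambda>c. u_c u1 t c x) (\<lambda>c. u_cc u1 t c x)
   (\<lambda>c. u2 t c x) (\<lambda>c. u_c u2 t c x) (\<lambda>c. u_cc u2 t c x)"
  unfolding oned_def using U2_one A1 A2 by blast

lemma u_fun: "(\<lambda>c. supconv u1 u2 t c x) = sc (\<lambda>c. u1 t c x) (\<lambda>c. u2 t c x)"
  by (rule ext) (simp add: supconv_def sc_def)

lemma Fz_prop: "t \<in> {0..1} \<Longrightarrow> 0 < c \<Longrightarrow>
   0 < Fz t c x \<and> Fz t c x < c \<and> u_c u1 t (Fz t c x) x = u_c u2 t (c - Fz t c x) x"
  using oned.root[OF od] by blast

lemma Fz_eq: "t \<in> {0..1} \<Longrightarrow> 0 < f \<Longrightarrow> f < c \<Longrightarrow> u_c u1 t f x = u_c u2 t (c - f) x \<Longrightarrow> f = Fz t c x"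
  using oned.root_eq[OF od] by blast

lemma uc: "t \<in> {0..1} \<Longrightarrow> 0 < c \<Longrightarrow> u_c (supconv u1 u2) t c x = u_c u1 t (Fz t c x) x"
  unfolding u_c_def[of "supconv u1 u2"] u_fun using oned.h_deriv_eq[OF od] by (simp add: u_c_def)

lemma ucc_deriv:
  assumes t: "t \<in> {0..1}" and c: "0 < c"
  shows "((\<lambda>c. u_c (supconv u1 u2) t c x) has_real_derivative
    u_cc u1 t (Fz t c x) x * (u_cc u2 t (c - Fz t c x) x / (u_cc u1 t (Fz t c x) x + u_cc u2 t (c - Fz t c x) x))) (at c)"
proof (rule has_field_derivative_transform_within_open[where S="{0<..}"])
  show "((\<lambda>c. u_c u1 t (Fz t c x) x) has_real_derivative
    u_cc u1 t (Fz t c x) x * (u_cc u2 t (c - Fz t c x) x / (u_cc u1 t (Fz t c x) x + u_cc u2 t (c - Fz t c x) x))) (at c)"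
    using oned.dF_deriv[OF od[OF t] c] by simp
qed (use c uc[OF t] in auto)

lemma ucc: "t \<in> {0..1} \<Longrightarrow> 0 < c \<Longrightarrow> u_cc (supconv u1 u2) t c x =
    u_cc u1 t (Fz t c x) x * (u_cc u2 t (c - Fz t c x) x / (u_cc u1 t (Fz t c x) x + u_cc u2 t (c - Fz t c x) x))"
  unfolding u_cc_def[of "supconv u1 u2"] by (rule DERIV_imp_deriv) (rule ucc_deriv)

lemma Fz_cont:
  assumes t: "t \<in> {0..1}" and c0: "0 < c0"
  shows "isCont (\<lambda>p. Fz t (fst p) (snd p)) (c0, x0)"
proof -
  define f0 where "f0 = Fz t c0 x0"
  have f0: "0 < f0" "f0 < c0" "u_c u1 t f0 x0 = u_c u2 t (c0 - f0) x0" using Fz_prop[OF t c0] unfolding f0_def by auto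
  define e0 where "e0 = min f0 (c0 - f0) / 2"
  have e0: "0 < e0" "e0 < f0" "2 * e0 \<le> c0 - f0" using f0 by (auto simp: e0_def)
  have J1: "isCont (\<lambda>p. u_c u1 t (fst p) (snd p)) (a, x0)" if "0 < a" for a using U2_uc_joint[OF A1 t that] .
  have J2: "isCont (\<lambda>p. u_c u2 t (fst p) (snd p)) (a, x0)" if "0 < a" for a using U2_uc_joint[OF A2 t that] .
  have cpsi: "isCont (\<lambda>p. u_c u1 t k (snd p) - u_c u2 t (fst p - k) (snd p)) (c0, x0)" if "0 < k" "k < c0" for k
  proof -
    have "isCont (\<lambda>p. u_c u1 t ((\<lambda>_. k) p) (snd p)) (c0, x0)"
      by (rule isCont2) (use J1[OF that(1)] in \<open>auto intro: continuous_intros\<close>)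
    moreover have "isCont (\<lambda>p. u_c u2 t ((\<lambda>p. fst p - k) p) (snd p)) (c0, x0)"
      by (rule isCont2) (use J2[of "c0 - k"] that in \<open>auto intro: continuous_intros\<close>)
    ultimately show ?thesis by (intro continuous_intros) auto
  qed
  have "((\<lambda>p. Fz t (fst p) (snd p)) \<longlongrightarrow> f0) (at (c0, x0))"
  proof (rule root_tendsto[where \<psi>="\<lambda>p a. u_c u1 t a (snd p) - u_c u2 t (fst p - a) (snd p)" and hi="\<lambda>p. fst p", OF e0(1,2)])
    fix \<epsilon> :: real assume \<epsilon>: "0 < \<epsilon>" "\<epsilon> < e0"
    interpret O: oned "\<lambda>c. u1 t c x0" "\<lambda>c. u_c u1 t c x0" "\<lambda>c. u_cc u1 t c x0"
      "\<lambda>c. u2 t c x0" "\<lambda>c. u_c u2 t c x0" "\<lambda>c. u_cc u2 t c x0" by (rule od[OF t])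
    have A: "0 < u_c u1 t (f0 - \<epsilon>) x0 - u_c u2 t (c0 - (f0 - \<epsilon>)) x0"
    proof -
      have "u_c u1 t f0 x0 < u_c u1 t (f0 - \<epsilon>) x0" using \<epsilon> e0 by (intro O.o1.dec) auto
      moreover have "u_c u2 t (c0 - (f0 - \<epsilon>)) x0 < u_c u2 t (c0 - f0) x0" using \<epsilon> e0 f0 by (intro O.o2.dec) auto
      ultimately show ?thesis using f0 by simp
    qed
    have B: "u_c u1 t (f0 + \<epsilon>) x0 - u_c u2 t (c0 - (f0 + \<epsilon>)) x0 < 0"
    proof -
      have "u_c u1 t (f0 + \<epsilon>) x0 < u_c u1 t f0 x0" using \<epsilon> e0 f0 by (intro O.o1.dec) auto
      moreover have "u_c u2 t (c0 - f0) x0 < u_c u2 t (c0 - (f0 + \<epsilon>)) x0" using \<epsilon> e0 f0 by (intro O.o2.dec) auto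
      ultimately show ?thesis using f0 by simp
    qed
    have evA: "\<forall>\<^sub>F p in at (c0, x0). 0 < u_c u1 t (f0 - \<epsilon>) (snd p) - u_c u2 t (fst p - (f0 - \<epsilon>)) (snd p)"
    proof -
      have "isCont (\<lambda>p. u_c u1 t (f0 - \<epsilon>) (snd p) - u_c u2 t (fst p - (f0 - \<epsilon>)) (snd p)) (c0, x0)"
        using cpsi[of "f0 - \<epsilon>"] \<epsilon> e0 f0 by simp
      then have "((\<lambda>p. u_c u1 t (f0 - \<epsilon>) (snd p) - u_c u2 t (fst p - (f0 - \<epsilon>)) (snd p)) \<longlongrightarrow>
          u_c u1 t (f0 - \<epsilon>) x0 - u_c u2 t (c0 - (f0 - \<epsilon>)) x0) (at (c0, x0))" unfolding isCont_def by simp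
      from order_tendstoD(1)[OF this A] show ?thesis .
    qed
    have evB: "\<forall>\<^sub>F p in at (c0, x0). u_c u1 t (f0 + \<epsilon>) (snd p) - u_c u2 t (fst p - (f0 + \<epsilon>)) (snd p) < 0"
    proof -
      have "isCont (\<lambda>p. u_c u1 t (f0 + \<epsilon>) (snd p) - u_c u2 t (fst p - (f0 + \<epsilon>)) (snd p)) (c0, x0)"
        using cpsi[of "f0 + \<epsilon>"] \<epsilon> e0 f0 by simp
      then have "((\<lambda>p. u_c u1 t (f0 + \<epsilon>) (snd p) - u_c u2 t (fst p - (f0 + \<epsilon>)) (snd p)) \<longlongrightarrow>
          u_c u1 t (f0 + \<epsilon>) x0 - u_c u2 t (c0 - (f0 + \<epsilon>)) x0) (at (c0, x0))" unfolding isCont_def by simp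
      from order_tendstoD(2)[OF this B] show ?thesis .
    qed
    have fc: "((\<lambda>p. fst p) \<longlongrightarrow> c0) (at (c0, x0))"
      using tendsto_fst[OF tendsto_ident_at[of "(c0, x0)" UNIV]] by simp
    have evC: "\<forall>\<^sub>F p in at (c0, x0). f0 + \<epsilon> < fst p"
      using order_tendstoD(1)[OF fc, of "f0 + \<epsilon>"] \<epsilon> e0 by simp
    show "\<forall>\<^sub>F p in at (c0, x0). 0 < u_c u1 t (f0 - \<epsilon>) (snd p) - u_c u2 t (fst p - (f0 - \<epsilon>)) (snd p) \<and>
          u_c u1 t (f0 + \<epsilon>) (snd p) - u_c u2 t (fst p - (f0 + \<epsilon>)) (snd p) < 0 \<and> f0 + \<epsilon> < fst p"
      using evA evB evC by eventually_elim auto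
  next
    have fc: "((\<lambda>p. fst p) \<longlongrightarrow> c0) (at (c0, x0))"
      using tendsto_fst[OF tendsto_ident_at[of "(c0, x0)" UNIV]] by simp
    have evC: "\<forall>\<^sub>F p in at (c0, x0). 0 < fst p"
      using order_tendstoD(1)[OF fc, of 0] c0 by simp
    then show "\<forall>\<^sub>F p in at (c0, x0). 0 < Fz t (fst p) (snd p) \<and> Fz t (fst p) (snd p) < fst p \<and>
       u_c u1 t (Fz t (fst p) (snd p)) (snd p) - u_c u2 t (fst p - Fz t (fst p) (snd p)) (snd p) = 0 \<and>
       (\<forall>a b. 0 < a \<longrightarrow> a < b \<longrightarrow> b < fst p \<longrightarrow>
          u_c u1 t b (snd p) - u_c u2 t (fst p - b) (snd p) < u_c u1 t a (snd p) - u_c u2 t (fst p - a) (snd p))"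
    proof eventually_elim
      case (elim p)
      interpret O: oned "\<lambda>c. u1 t c (snd p)" "\<lambda>c. u_c u1 t c (snd p)" "\<lambda>c. u_cc u1 t c (snd p)"
        "\<lambda>c. u2 t c (snd p)" "\<lambda>c. u_c u2 t c (snd p)" "\<lambda>c. u_cc u2 t c (snd p)" by (rule od[OF t])
      have m: "u_c u1 t b (snd p) - u_c u2 t (fst p - b) (snd p) < u_c u1 t a (snd p) - u_c u2 t (fst p - a) (snd p)"
        if "0 < a" "a < b" "b < fst p" for a b
      proof -
        have "u_c u1 t b (snd p) < u_c u1 t a (snd p)" using that by (intro O.o1.dec) auto
        moreover have "u_c u2 t (fst p - a) (snd p) < u_c u2 t (fst p - b) (snd p)" using that by (intro O.o2.dec) auto
        ultimately show ?thesis by simp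
      qed
      have "0 < Fz t (fst p) (snd p) \<and> Fz t (fst p) (snd p) < fst p \<and>
        u_c u1 t (Fz t (fst p) (snd p)) (snd p) = u_c u2 t (fst p - Fz t (fst p) (snd p)) (snd p)"
        by (rule Fz_prop[OF t elim])
      then show ?case using m by simp
    qed
  qed
  then show ?thesis unfolding isCont_def f0_def by simp
qed

lemma Fz_dx:
  assumes t: "t \<in> {0..1}" and c: "0 < c"
  shows "((\<lambda>s. Fz t c (x + s *\<^sub>R axis i 1)) has_real_derivative
     - (u_cx u1 i t (Fz t c x) x - u_cx u2 i t (c - Fz t c x) x) /
       (u_cc u1 t (Fz t c x) x + u_cc u2 t (c - Fz t c x) x)) (at 0)"
proof -
  define f0 where "f0 = Fz t c x"
  have f0: "0 < f0" "f0 < c" "u_c u1 t f0 x = u_c u2 t (c - f0) x" using Fz_prop[OF t c] unfolding f0_def by auto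
  define r where "r = min f0 (c - f0) / 2"
  have r: "0 < r" "r < f0" "2 * r \<le> c - f0" using f0 by (auto simp: r_def)
  define e where "e = (axis i 1 :: real^'d)"
  have "((\<lambda>s. Fz t c (x + s *\<^sub>R e)) has_real_derivative
     - (u_cx u1 i t f0 x - u_cx u2 i t (c - f0) x) / (u_cc u1 t f0 (x + 0 *\<^sub>R e) + u_cc u2 t (c - f0) (x + 0 *\<^sub>R e))) (at 0)"
  proof (rule ift[where G="\<lambda>b s. u_c u1 t b (x + s *\<^sub>R e) - u_c u2 t (c - b) (x + s *\<^sub>R e)"
      and Ga="\<lambda>b s. u_cc u1 t b (x + s *\<^sub>R e) + u_cc u2 t (c - b) (x + s *\<^sub>R e)", OF r(1)])
    fix b s :: real assume bs: "\<bar>b - f0\<bar> < r" "\<bar>s - 0\<bar> < r"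
    then have b0: "0 < b" "0 < c - b" using r by auto
    interpret O2: one "\<lambda>c. u2 t c (x + s *\<^sub>R e)" "\<lambda>c. u_c u2 t c (x + s *\<^sub>R e)" "\<lambda>c. u_cc u2 t c (x + s *\<^sub>R e)"
      by (rule U2_one[OF A2 t])
    from DERIV_diff[OF U2_dd[OF A1 t b0(1), of "x + s *\<^sub>R e"] O2.d_refl[OF b0(2)]]
    show "((\<lambda>b. u_c u1 t b (x + s *\<^sub>R e) - u_c u2 t (c - b) (x + s *\<^sub>R e)) has_real_derivative
        u_cc u1 t b (x + s *\<^sub>R e) + u_cc u2 t (c - b) (x + s *\<^sub>R e)) (at b)" by simp
  next
    have i1: "isCont (\<lambda>p. u_cc u1 t (fst p) (x + snd p *\<^sub>R e)) (f0, 0)"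
      by (rule isCont2[where G="u_cc u1 t"]) (use cont_on_isCont[OF U2_cc_cont[OF A1 t] f0(1)] in \<open>auto intro!: continuous_intros\<close>)
    have i2: "isCont (\<lambda>p. u_cc u2 t (c - fst p) (x + snd p *\<^sub>R e)) (f0, 0)"
      by (rule isCont2[where G="u_cc u2 t"]) (use cont_on_isCont[OF U2_cc_cont[OF A2 t], of "c - f0"] f0 in \<open>auto intro!: continuous_intros\<close>)
    show "isCont (\<lambda>p. u_cc u1 t (fst p) (x + snd p *\<^sub>R e) + u_cc u2 t (c - fst p) (x + snd p *\<^sub>R e)) (f0, 0)"
      using i1 i2 by (intro continuous_intros)
  next
    have "isCont (\<lambda>s. Fz t ((\<lambda>s. c) s) ((\<lambda>s. x + s *\<^sub>R e) s)) 0"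
      by (rule isCont2[where G="Fz t"]) (use Fz_cont[OF t c] in \<open>auto intro!: continuous_intros\<close>)
    then show "((\<lambda>s. Fz t c (x + s *\<^sub>R e)) \<longlongrightarrow> f0) (at 0)" unfolding isCont_def f0_def by simp
  next
    show "Fz t c (x + 0 *\<^sub>R e) = f0" by (simp add: f0_def)
  next
    show "\<forall>\<^sub>F s in at 0. u_c u1 t (Fz t c (x + s *\<^sub>R e)) (x + s *\<^sub>R e) - u_c u2 t (c - Fz t c (x + s *\<^sub>R e)) (x + s *\<^sub>R e) = 0"
      using Fz_prop[OF t c] by (intro always_eventually) auto
  next
    show "u_c u1 t f0 (x + 0 *\<^sub>R e) - u_c u2 t (c - f0) (x + 0 *\<^sub>R e) = 0" using f0 by simp
  next
    have "0 < c - f0" using f0 by simp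
    from DERIV_diff[OF U2_dx[OF A1 t f0(1), of x i] U2_dx[OF A2 t this, of x i]]
    show "((\<lambda>s. u_c u1 t f0 (x + s *\<^sub>R e) - u_c u2 t (c - f0) (x + s *\<^sub>R e)) has_real_derivative
        u_cx u1 i t f0 x - u_cx u2 i t (c - f0) x) (at 0)" unfolding e_def .
  next
    show "u_cc u1 t f0 (x + 0 *\<^sub>R e) + u_cc u2 t (c - f0) (x + 0 *\<^sub>R e) \<noteq> 0"
      using U2_ccneg[OF A1 t f0(1), of x] U2_ccneg[OF A2 t, of "c - f0" x] f0 by simp
  qed
  then show ?thesis unfolding f0_def e_def by simp
qed

lemma ucx_deriv:
  assumes t: "t \<in> {0..1}" and c: "0 < c"
  shows "((\<lambda>s. u_c (supconv u1 u2) t c (x + s *\<^sub>R axis i 1)) has_real_derivative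
     u_cc u1 t (Fz t c x) x * (- (u_cx u1 i t (Fz t c x) x - u_cx u2 i t (c - Fz t c x) x) /
       (u_cc u1 t (Fz t c x) x + u_cc u2 t (c - Fz t c x) x)) + u_cx u1 i t (Fz t c x) x) (at 0)"
proof -
  define f0 where "f0 = Fz t c x"
  have f0: "0 < f0" "f0 < c" using Fz_prop[OF t c] unfolding f0_def by auto
  define e where "e = (axis i 1 :: real^'d)"
  have "((\<lambda>s. u_c u1 t (Fz t c (x + s *\<^sub>R e)) (x + s *\<^sub>R e)) has_real_derivative
     u_cc u1 t f0 (x + 0 *\<^sub>R e) * (- (u_cx u1 i t f0 x - u_cx u2 i t (c - f0) x) /
       (u_cc u1 t f0 x + u_cc u2 t (c - f0) x)) + u_cx u1 i t f0 x) (at 0)"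
  proof (rule chain2[where G="\<lambda>b s. u_c u1 t b (x + s *\<^sub>R e)" and Ga="\<lambda>b s. u_cc u1 t b (x + s *\<^sub>R e)", OF f0(1)])
    fix b s :: real assume "\<bar>b - f0\<bar> < f0" "\<bar>s - 0\<bar> < f0"
    then have "0 < b" by simp
    then show "((\<lambda>b. u_c u1 t b (x + s *\<^sub>R e)) has_real_derivative u_cc u1 t b (x + s *\<^sub>R e)) (at b)"
      by (rule U2_dd[OF A1 t])
  next
    show "isCont (\<lambda>p. u_cc u1 t (fst p) (x + snd p *\<^sub>R e)) (f0, 0)"
      by (rule isCont2[where G="u_cc u1 t"]) (use cont_on_isCont[OF U2_cc_cont[OF A1 t] f0(1)] in \<open>auto intro!: continuous_intros\<close>)
  next
    show "Fz t c (x + 0 *\<^sub>R e) = f0" by (simp add: f0_def)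
  next
    show "((\<lambda>s. Fz t c (x + s *\<^sub>R e)) has_real_derivative
       - (u_cx u1 i t f0 x - u_cx u2 i t (c - f0) x) / (u_cc u1 t f0 x + u_cc u2 t (c - f0) x)) (at 0)"
      using Fz_dx[OF t c, of x i] unfolding f0_def e_def .
  next
    show "((\<lambda>s. u_c u1 t f0 (x + s *\<^sub>R e)) has_real_derivative u_cx u1 i t f0 x) (at 0)"
      unfolding e_def by (rule U2_dx[OF A1 t f0(1)])
  qed
  moreover have "(\<lambda>s. u_c (supconv u1 u2) t c (x + s *\<^sub>R e)) = (\<lambda>s. u_c u1 t (Fz t c (x + s *\<^sub>R e)) (x + s *\<^sub>R e))"
    by (rule ext) (rule uc[OF t c])
  ultimately show ?thesis unfolding f0_def e_def by simp
qed

lemma ucx: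
  assumes t: "t \<in> {0..1}" and c: "0 < c"
  shows "u_cx (supconv u1 u2) i t c x =
     u_cc u1 t (Fz t c x) x * (- (u_cx u1 i t (Fz t c x) x - u_cx u2 i t (c - Fz t c x) x) /
       (u_cc u1 t (Fz t c x) x + u_cc u2 t (c - Fz t c x) x)) + u_cx u1 i t (Fz t c x) x"
  unfolding u_cx_def[of "supconv u1 u2"] by (rule DERIV_imp_deriv) (rule ucx_deriv[OF t c])

end



lemma bound_alg:
  fixes D a b f g X1 X2 N1 N2 :: real
  assumes D: "D > 0" and a: "a > 0" and b: "b > 0" and f: "f > 0" and g: "g > 0"
    and h1: "f * a / D + \<bar>X1\<bar> / D \<le> N1" and h2: "g * b / D + \<bar>X2\<bar> / D \<le> N2"
  shows "(f + g) * (a * b / (a + b)) / D + \<bar>(a * X2 + b * X1) / (a + b)\<bar> / D \<le> 2 * (N1 + N2)"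
proof -
  have ab: "a * b / (a + b) \<le> a" "a * b / (a + b) \<le> b" using a b by (auto simp: field_simps)
  have t1: "(f + g) * (a * b / (a + b)) \<le> f * a + g * b"
  proof -
    have "f * (a * b / (a + b)) \<le> f * a" using mult_left_mono[OF ab(1), of f] f by simp
    moreover have "g * (a * b / (a + b)) \<le> g * b" using mult_left_mono[OF ab(2), of g] g by simp
    moreover have "(f + g) * (a * b / (a + b)) = f * (a * b / (a + b)) + g * (a * b / (a + b))"
      by (rule distrib_right)
    ultimately show ?thesis by linarith
  qed
  have "\<bar>a * X2 + b * X1\<bar> \<le> a * \<bar>X2\<bar> + b * \<bar>X1\<bar>"
    using a b by (metis abs_mult abs_of_pos abs_triangle_ineq)
  also have "\<dots> \<le> (a + b) * (\<bar>X1\<bar> + \<bar>X2\<bar>)" using a b by (simp add: algebra_simps)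
  finally have "\<bar>(a * X2 + b * X1) / (a + b)\<bar> \<le> \<bar>X1\<bar> + \<bar>X2\<bar>"
    using a b by (simp add: abs_divide pos_divide_le_eq mult.commute)
  then have t2: "\<bar>(a * X2 + b * X1) / (a + b)\<bar> / D \<le> \<bar>X1\<bar> / D + \<bar>X2\<bar> / D"
  proof -
    have "\<bar>(a * X2 + b * X1) / (a + b)\<bar> / D \<le> (\<bar>X1\<bar> + \<bar>X2\<bar>) / D"
      by (rule divide_right_mono) (use \<open>\<bar>(a * X2 + b * X1) / (a + b)\<bar> \<le> _\<close> D in auto)
    then show ?thesis by (simp add: add_divide_distrib)
  qed
  have t1': "(f + g) * (a * b / (a + b)) / D \<le> f * a / D + g * b / D"
  proof -
    have "(f + g) * (a * b / (a + b)) / D \<le> (f * a + g * b) / D"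
      by (rule divide_right_mono) (use t1 D in auto)
    then show ?thesis by (simp add: add_divide_distrib)
  qed
  have p: "0 \<le> \<bar>X1\<bar> / D" "0 \<le> \<bar>X2\<bar> / D" "0 \<le> f * a / D" "0 \<le> g * b / D" using D f g a b by auto
  show ?thesis using t1' t2 h1 h2 p by argo
qed

lemma growth_alg:
  fixes M L p1 p2 p3 p4 :: real
  assumes L: "L \<ge> 1"
    and "p1 \<le> exp (M * L)" "p2 \<le> exp (M * L)" "p3 \<le> exp (M * L)" "p4 \<le> exp (M * L)"
  shows "p1 + p2 + p3 + p4 \<le> exp ((M + 3) * L)"
proof -
  have "4 \<le> 1 + 3 * L" using L by simp
  also have "\<dots> \<le> exp (3 * L)" by (rule exp_ge_add_one_self)
  finally have "4 * exp (M * L) \<le> exp (3 * L) * exp (M * L)" by simp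
  also have "\<dots> = exp ((M + 3) * L)" by (simp add: exp_add[symmetric] algebra_simps)
  finally show ?thesis using assms by linarith
qed

context pair
begin

lemma pieces_cont:
  assumes t: "t \<in> {0..1}" and c0: "0 < c0"
  shows "isCont (\<lambda>p. u_cc u1 t (Fz t (fst p) (snd p)) (snd p)) (c0, x0)"
    "isCont (\<lambda>p. u_cc u2 t (fst p - Fz t (fst p) (snd p)) (snd p)) (c0, x0)"
    "isCont (\<lambda>p. u_cx u1 i t (Fz t (fst p) (snd p)) (snd p)) (c0, x0)"
    "isCont (\<lambda>p. u_cx u2 i t (fst p - Fz t (fst p) (snd p)) (snd p)) (c0, x0)"
proof -
  have f: "0 < Fz t c0 x0" "0 < c0 - Fz t c0 x0" using Fz_prop[OF t c0, of x0] by auto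
  have Fc: "isCont (\<lambda>p. Fz t (fst p) (snd p)) (c0, x0)" by (rule Fz_cont[OF t c0])
  have Gc: "isCont (\<lambda>p. fst p - Fz t (fst p) (snd p)) (c0, x0)" using Fc by (intro continuous_intros)
  show "isCont (\<lambda>p. u_cc u1 t (Fz t (fst p) (snd p)) (snd p)) (c0, x0)"
    by (rule isCont2[where G="u_cc u1 t"]) (use cont_on_isCont[OF U2_cc_cont[OF A1 t] f(1)] Fc in \<open>auto intro: continuous_intros\<close>)
  show "isCont (\<lambda>p. u_cc u2 t (fst p - Fz t (fst p) (snd p)) (snd p)) (c0, x0)"
    by (rule isCont2[where G="u_cc u2 t"]) (use cont_on_isCont[OF U2_cc_cont[OF A2 t] f(2)] Gc in \<open>auto intro: continuous_intros\<close>)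
  show "isCont (\<lambda>p. u_cx u1 i t (Fz t (fst p) (snd p)) (snd p)) (c0, x0)"
    by (rule isCont2[where G="u_cx u1 i t"]) (use cont_on_isCont[OF U2_cx_cont[OF A1 t] f(1)] Fc in \<open>auto intro: continuous_intros\<close>)
  show "isCont (\<lambda>p. u_cx u2 i t (fst p - Fz t (fst p) (snd p)) (snd p)) (c0, x0)"
    by (rule isCont2[where G="u_cx u2 i t"]) (use cont_on_isCont[OF U2_cx_cont[OF A2 t] f(2)] Gc in \<open>auto intro: continuous_intros\<close>)
qed

lemma AB_neg:
  assumes t: "t \<in> {0..1}" and c: "0 < c"
  shows "u_cc u1 t (Fz t c x) x < 0" "u_cc u2 t (c - Fz t c x) x < 0"
  using Fz_prop[OF t c, of x] U2_ccneg[OF A1 t] U2_ccneg[OF A2 t] by auto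

lemma ucc_cont:
  assumes t: "t \<in> {0..1}"
  shows "continuous_on ({0<..} \<times> UNIV) (\<lambda>(c, x). u_cc (supconv u1 u2) t c x)"
proof (rule continuous_on_eq)
  show "continuous_on ({0<..} \<times> UNIV) (\<lambda>p. u_cc u1 t (Fz t (fst p) (snd p)) (snd p) *
     (u_cc u2 t (fst p - Fz t (fst p) (snd p)) (snd p) /
      (u_cc u1 t (Fz t (fst p) (snd p)) (snd p) + u_cc u2 t (fst p - Fz t (fst p) (snd p)) (snd p))))"
  proof (intro continuous_at_imp_continuous_on ballI)
    fix p :: "real \<times> (real^'d)" assume "p \<in> {0<..} \<times> UNIV"
    then obtain c0 x0 where p: "p = (c0, x0)" "0 < c0" by auto
    have nz: "u_cc u1 t (Fz t c0 x0) x0 + u_cc u2 t (c0 - Fz t c0 x0) x0 \<noteq> 0"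
      using AB_neg[OF t p(2), of x0] by simp
    show "isCont (\<lambda>p. u_cc u1 t (Fz t (fst p) (snd p)) (snd p) *
     (u_cc u2 t (fst p - Fz t (fst p) (snd p)) (snd p) /
      (u_cc u1 t (Fz t (fst p) (snd p)) (snd p) + u_cc u2 t (fst p - Fz t (fst p) (snd p)) (snd p)))) p"
      unfolding p(1) using pieces_cont[OF t p(2)] nz by (intro continuous_intros) auto
  qed
next
  fix p :: "real \<times> (real^'d)" assume "p \<in> {0<..} \<times> UNIV"
  then obtain c0 x0 where p: "p = (c0, x0)" "0 < c0" by auto
  show "u_cc u1 t (Fz t (fst p) (snd p)) (snd p) *
     (u_cc u2 t (fst p - Fz t (fst p) (snd p)) (snd p) /
      (u_cc u1 t (Fz t (fst p) (snd p)) (snd p) + u_cc u2 t (fst p - Fz t (fst p) (snd p)) (snd p)))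
     = (\<lambda>(c, x). u_cc (supconv u1 u2) t c x) p"
    unfolding p(1) using ucc[OF t p(2)] by simp
qed

lemma ucx_cont:
  assumes t: "t \<in> {0..1}"
  shows "continuous_on ({0<..} \<times> UNIV) (\<lambda>(c, x). u_cx (supconv u1 u2) i t c x)"
proof (rule continuous_on_eq)
  show "continuous_on ({0<..} \<times> UNIV) (\<lambda>p. u_cc u1 t (Fz t (fst p) (snd p)) (snd p) *
     (- (u_cx u1 i t (Fz t (fst p) (snd p)) (snd p) - u_cx u2 i t (fst p - Fz t (fst p) (snd p)) (snd p)) /
      (u_cc u1 t (Fz t (fst p) (snd p)) (snd p) + u_cc u2 t (fst p - Fz t (fst p) (snd p)) (snd p))) +
      u_cx u1 i t (Fz t (fst p) (snd p)) (snd p))"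
  proof (intro continuous_at_imp_continuous_on ballI)
    fix p :: "real \<times> (real^'d)" assume "p \<in> {0<..} \<times> UNIV"
    then obtain c0 x0 where p: "p = (c0, x0)" "0 < c0" by auto
    have nz: "u_cc u1 t (Fz t c0 x0) x0 + u_cc u2 t (c0 - Fz t c0 x0) x0 \<noteq> 0"
      using AB_neg[OF t p(2), of x0] by simp
    show "isCont (\<lambda>p. u_cc u1 t (Fz t (fst p) (snd p)) (snd p) *
     (- (u_cx u1 i t (Fz t (fst p) (snd p)) (snd p) - u_cx u2 i t (fst p - Fz t (fst p) (snd p)) (snd p)) /
      (u_cc u1 t (Fz t (fst p) (snd p)) (snd p) + u_cc u2 t (fst p - Fz t (fst p) (snd p)) (snd p))) +
      u_cx u1 i t (Fz t (fst p) (snd p)) (snd p)) p"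
      unfolding p(1) using pieces_cont[OF t p(2)] nz by (intro continuous_intros) auto
  qed
next
  fix p :: "real \<times> (real^'d)" assume "p \<in> {0<..} \<times> UNIV"
  then obtain c0 x0 where p: "p = (c0, x0)" "0 < c0" by auto
  show "u_cc u1 t (Fz t (fst p) (snd p)) (snd p) *
     (- (u_cx u1 i t (Fz t (fst p) (snd p)) (snd p) - u_cx u2 i t (fst p - Fz t (fst p) (snd p)) (snd p)) /
      (u_cc u1 t (Fz t (fst p) (snd p)) (snd p) + u_cc u2 t (fst p - Fz t (fst p) (snd p)) (snd p))) +
      u_cx u1 i t (Fz t (fst p) (snd p)) (snd p)
     = (\<lambda>(c, x). u_cx (supconv u1 u2) i t c x) p"
    unfolding p(1) using ucx[OF t p(2)] by simp
qed

lemma ucc_neg: "t \<in> {0..1} \<Longrightarrow> 0 < c \<Longrightarrow> u_cc (supconv u1 u2) t c x < 0"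
proof -
  assume t: "t \<in> {0..1}" and c: "0 < c"
  have A: "u_cc u1 t (Fz t c x) x < 0" and B: "u_cc u2 t (c - Fz t c x) x < 0" using AB_neg[OF t c] by auto
  have "0 < u_cc u2 t (c - Fz t c x) x / (u_cc u1 t (Fz t c x) x + u_cc u2 t (c - Fz t c x) x)"
    using A B by (intro divide_neg_neg) auto
  from mult_neg_pos[OF A this] show ?thesis using ucc[OF t c, of x] by simp
qed

lemma Nbound:
  "\<exists>N>0. \<forall>t\<in>{0..1}. \<forall>c>0. \<forall>x. \<forall>i.
     - c * u_cc (supconv u1 u2) t c x / u_c (supconv u1 u2) t c x
       + \<bar>u_cx (supconv u1 u2) i t c x\<bar> / u_c (supconv u1 u2) t c x \<le> N"
proof -
  have "\<exists>N>0. \<forall>t\<in>{0..1}. \<forall>c>0. \<forall>x i.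
      - c * u_cc u1 t c x / u_c u1 t c x + \<bar>u_cx u1 i t c x\<bar> / u_c u1 t c x \<le> N"
    using A1 unfolding U2_def by blast
  then obtain N1 where N1: "N1 > 0" "\<And>t c x i. t \<in> {0..1} \<Longrightarrow> 0 < c \<Longrightarrow>
      - c * u_cc u1 t c x / u_c u1 t c x + \<bar>u_cx u1 i t c x\<bar> / u_c u1 t c x \<le> N1"
    by blast
  have "\<exists>N>0. \<forall>t\<in>{0..1}. \<forall>c>0. \<forall>x i.
      - c * u_cc u2 t c x / u_c u2 t c x + \<bar>u_cx u2 i t c x\<bar> / u_c u2 t c x \<le> N"
    using A2 unfolding U2_def by blast
  then obtain N2 where N2: "N2 > 0" "\<And>t c x i. t \<in> {0..1} \<Longrightarrow> 0 < c \<Longrightarrow>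
      - c * u_cc u2 t c x / u_c u2 t c x + \<bar>u_cx u2 i t c x\<bar> / u_c u2 t c x \<le> N2"
    by blast
  have "- c * u_cc (supconv u1 u2) t c x / u_c (supconv u1 u2) t c x
       + \<bar>u_cx (supconv u1 u2) i t c x\<bar> / u_c (supconv u1 u2) t c x \<le> 2 * (N1 + N2)"
    if t: "t \<in> {0..1}" and c: "0 < c" for t c x i
  proof -
    define f where "f = Fz t c x"
    define g where "g = c - f"
    have fg: "0 < f" "0 < g" "u_c u1 t f x = u_c u2 t g x" "c = f + g"
      using Fz_prop[OF t c, of x] unfolding f_def g_def by auto
    define D where "D = u_c u1 t f x"
    interpret O1: one "\<lambda>c. u1 t c x" "\<lambda>c. u_c u1 t c x" "\<lambda>c. u_cc u1 t c x" by (rule U2_one[OF A1 t])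
    have D: "0 < D" unfolding D_def by (rule O1.pos[OF fg(1)])
    define a where "a = - u_cc u1 t f x"
    define b where "b = - u_cc u2 t g x"
    have ab: "0 < a" "0 < b" using U2_ccneg[OF A1 t fg(1)] U2_ccneg[OF A2 t fg(2)] unfolding a_def b_def by auto
    define X1 where "X1 = u_cx u1 i t f x"
    define X2 where "X2 = u_cx u2 i t g x"
    have h1: "f * a / D + \<bar>X1\<bar> / D \<le> N1" using N1(2)[OF t fg(1), of x i] unfolding a_def D_def X1_def by simp
    have h2: "g * b / D + \<bar>X2\<bar> / D \<le> N2" using N2(2)[OF t fg(2), of x i] fg(3) unfolding b_def D_def X2_def by simp
    have e0: "u_c (supconv u1 u2) t c x = D" using uc[OF t c] unfolding D_def f_def by simp
    have e1: "u_cc (supconv u1 u2) t c x = - (a * b / (a + b))"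
    proof -
      have "u_cc (supconv u1 u2) t c x = (- a) * ((- b) / ((- a) + (- b)))"
        using ucc[OF t c, of x] unfolding a_def b_def f_def g_def by simp
      also have "\<dots> = - (a * b / (a + b))" using ab by (simp add: field_simps)
      finally show ?thesis .
    qed
    have e2: "u_cx (supconv u1 u2) i t c x = (a * X2 + b * X1) / (a + b)"
    proof -
      have "u_cx (supconv u1 u2) i t c x = (- a) * (- (X1 - X2) / ((- a) + (- b))) + X1"
        using ucx[OF t c, of i x] unfolding a_def b_def f_def g_def X1_def X2_def by simp
      also have "\<dots> = (a * X2 + b * X1) / (a + b)" using ab by (simp add: field_simps)
      finally show ?thesis .
    qed
    have "- c * u_cc (supconv u1 u2) t c x / u_c (supconv u1 u2) t c x
       + \<bar>u_cx (supconv u1 u2) i t c x\<bar> / u_c (supconv u1 u2) t c x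
       = - c * (- (a * b / (a + b))) / D + \<bar>(a * X2 + b * X1) / (a + b)\<bar> / D"
      unfolding e0 e1 e2 by simp
    also have "\<dots> = (f + g) * (a * b / (a + b)) / D + \<bar>(a * X2 + b * X1) / (a + b)\<bar> / D"
      by (simp only: fg(4) mult_minus_left mult_minus_right minus_minus)
    also have "\<dots> \<le> 2 * (N1 + N2)" by (rule bound_alg[OF D ab fg(1,2) h1 h2])
    finally show ?thesis .
  qed
  then show ?thesis using N1(1) N2(1) by (intro exI[of _ "2 * (N1 + N2)"]) auto
qed

lemma growth:
  "\<exists>N>0. \<forall>t\<in>{0..1}. \<forall>x y. \<bar>supconv u1 u2 t (exp y) x\<bar> \<le> exp (N * (1 + norm x + \<bar>y\<bar>))"
proof -
  have "\<exists>N>0. \<forall>t\<in>{0..1}. \<forall>x y. \<bar>u1 t (exp y) x\<bar> \<le> exp (N * (1 + norm x + \<bar>y\<bar>))"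
    using A1 unfolding U2_def U1_def by blast
  then obtain N1 where N1: "N1 > 0" "\<And>t x y. t \<in> {0..1} \<Longrightarrow> \<bar>u1 t (exp y) x\<bar> \<le> exp (N1 * (1 + norm x + \<bar>y\<bar>))"
    by blast
  have "\<exists>N>0. \<forall>t\<in>{0..1}. \<forall>x y. \<bar>u2 t (exp y) x\<bar> \<le> exp (N * (1 + norm x + \<bar>y\<bar>))"
    using A2 unfolding U2_def U1_def by blast
  then obtain N2 where N2: "N2 > 0" "\<And>t x y. t \<in> {0..1} \<Longrightarrow> \<bar>u2 t (exp y) x\<bar> \<le> exp (N2 * (1 + norm x + \<bar>y\<bar>))"
    by blast
  define K where "K = N1 + N2"
  have "\<bar>supconv u1 u2 t (exp y) x\<bar> \<le> exp ((3 * K + 3) * (1 + norm x + \<bar>y\<bar>))"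
    if t: "t \<in> {0..1}" for t x y
  proof -
    define L where "L = 1 + norm x + \<bar>y\<bar>"
    have L: "L \<ge> 1" unfolding L_def by simp
    define c where "c = exp y"
    have c: "0 < c" unfolding c_def by simp
    have c2: "c / 2 = exp (y - ln 2)" unfolding c_def by (simp add: exp_diff)
    interpret O: oned "\<lambda>c. u1 t c x" "\<lambda>c. u_c u1 t c x" "\<lambda>c. u_cc u1 t c x"
      "\<lambda>c. u2 t c x" "\<lambda>c. u_c u2 t c x" "\<lambda>c. u_cc u2 t c x" by (rule od[OF t])
    have eq: "supconv u1 u2 t c x = sc (\<lambda>c. u1 t c x) (\<lambda>c. u2 t c x) c" by (simp add: supconv_def sc_def)
    have lo: "u1 t (c/2) x + u2 t (c/2) x \<le> supconv u1 u2 t c x" using O.sc_lower[OF c] eq by simp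
    have hi: "supconv u1 u2 t c x \<le> u1 t c x + u2 t c x" using O.sc_upper[OF c] eq by simp
    have abs: "\<bar>supconv u1 u2 t c x\<bar> \<le> \<bar>u1 t c x\<bar> + \<bar>u2 t c x\<bar> + \<bar>u1 t (c/2) x\<bar> + \<bar>u2 t (c/2) x\<bar>"
      using lo hi by linarith
    have ly: "1 + norm x + \<bar>y - ln 2\<bar> \<le> 3 * L"
    proof -
      have "\<bar>y - ln 2\<bar> \<le> \<bar>y\<bar> + ln 2" using ln_ge_zero[of 2] by linarith
      moreover have "ln (2::real) < 2" by (rule ln_less_self) simp
      ultimately show ?thesis unfolding L_def using norm_ge_zero[of x] abs_ge_zero[of y] by (smt (verit))
    qed
    have K1: "N1 \<le> K" "N2 \<le> K" "0 \<le> K" using N1(1) N2(1) unfolding K_def by auto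
    have b: "N * L' \<le> 3 * K * L" if "0 < N" "N \<le> K" "0 \<le> L'" "L' \<le> 3 * L" for N L'
    proof -
      have "N * L' \<le> K * (3 * L)" using that by (intro mult_mono) auto
      then show ?thesis by simp
    qed
    have p1: "\<bar>u1 t (c) x\<bar> \<le> exp (3 * K * L)"
    proof -
      have "N1 * (1 + norm x + \<bar>y\<bar>) \<le> 3 * K * L" by (rule b[OF N1(1) K1(1)]) (use L in \<open>auto simp: L_def\<close>)
      moreover have "\<bar>u1 t (c) x\<bar> \<le> exp (N1 * (1 + norm x + \<bar>y\<bar>))" unfolding c_def by (rule N1(2)[OF t])
      ultimately show ?thesis by (meson exp_le_cancel_iff order_trans)
    qed
    have p2: "\<bar>u2 t (c) x\<bar> \<le> exp (3 * K * L)"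
    proof -
      have "N2 * (1 + norm x + \<bar>y\<bar>) \<le> 3 * K * L" by (rule b[OF N2(1) K1(2)]) (use L in \<open>auto simp: L_def\<close>)
      moreover have "\<bar>u2 t (c) x\<bar> \<le> exp (N2 * (1 + norm x + \<bar>y\<bar>))" unfolding c_def by (rule N2(2)[OF t])
      ultimately show ?thesis by (meson exp_le_cancel_iff order_trans)
    qed
    have p3: "\<bar>u1 t (c/2) x\<bar> \<le> exp (3 * K * L)"
    proof -
      have "N1 * (1 + norm x + \<bar>y - ln 2\<bar>) \<le> 3 * K * L" by (rule b[OF N1(1) K1(1)]) (use ly in auto)
      moreover have "\<bar>u1 t (c/2) x\<bar> \<le> exp (N1 * (1 + norm x + \<bar>y - ln 2\<bar>))" unfolding c2 by (rule N1(2)[OF t])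
      ultimately show ?thesis by (meson exp_le_cancel_iff order_trans)
    qed
    have p4: "\<bar>u2 t (c/2) x\<bar> \<le> exp (3 * K * L)"
    proof -
      have "N2 * (1 + norm x + \<bar>y - ln 2\<bar>) \<le> 3 * K * L" by (rule b[OF N2(1) K1(2)]) (use ly in auto)
      moreover have "\<bar>u2 t (c/2) x\<bar> \<le> exp (N2 * (1 + norm x + \<bar>y - ln 2\<bar>))" unfolding c2 by (rule N2(2)[OF t])
      ultimately show ?thesis by (meson exp_le_cancel_iff order_trans)
    qed
    have "\<bar>u1 t c x\<bar> + \<bar>u2 t c x\<bar> + \<bar>u1 t (c/2) x\<bar> + \<bar>u2 t (c/2) x\<bar> \<le> exp ((3 * K + 3) * L)"
      using growth_alg[OF L p1 p2 p3 p4] by simp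
    then show ?thesis using abs unfolding c_def L_def by simp
  qed
  moreover have "0 < 3 * K + 3" using N1(1) N2(1) unfolding K_def by simp
  ultimately show ?thesis by blast
qed

end



lemma alg1: fixes A B D :: real assumes "A < 0" "B < 0"
  shows "D / (A * (B / (A + B))) = D / A + D / B"
  using assms by (simp add: field_simps)

lemma alg2: fixes A B X1 X2 :: real assumes "A < 0" "B < 0"
  shows "(A * (- (X1 - X2) / (A + B)) + X1) / (A * (B / (A + B))) = X1 / A + X2 / B"
proof -
  have nz: "A \<noteq> 0" "B \<noteq> 0" "A + B \<noteq> 0" using assms by auto
  have "(A * (- (X1 - X2) / (A + B)) + X1) * (A + B) = A * (- (X1 - X2) / (A + B)) * (A + B) + X1 * (A + B)"
    by (simp add: distrib_right)
  also have "A * (- (X1 - X2) / (A + B)) * (A + B) = A * (- (X1 - X2))" using nz by simp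
  finally have "(A * (- (X1 - X2) / (A + B)) + X1) * (A + B) = A * X2 + B * X1" by (simp add: algebra_simps)
  then have "A * (- (X1 - X2) / (A + B)) + X1 = (A * X2 + B * X1) / (A + B)" using nz by (simp add: eq_divide_eq)
  moreover have "(A * X2 + B * X1) / (A + B) / (A * (B / (A + B))) = (A * X2 + B * X1) / (A * B)"
  proof -
    have g: "y / S / (A * (B / S)) = y / (A * B)" if "S \<noteq> 0" for y S :: real
      using that nz by (simp add: field_simps)
    show ?thesis by (rule g) (rule nz(3))
  qed
  moreover have "(A * X2 + B * X1) / (A * B) = X1 / A + X2 / B" using nz by (simp add: field_simps)
  ultimately show ?thesis by simp
qed

context pair
begin

lemma meas:
  "(\<lambda>(t, c, x). supconv u1 u2 t c x) \<in> borel_measurable (restrict_space borel ({0..1} \<times> {0<..} \<times> UNIV))"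
proof -
  define \<Omega> where "\<Omega> = ({0..1} \<times> {0<..} \<times> UNIV :: (real \<times> real \<times> (real^'d)) set)"
  define M where "M = restrict_space borel \<Omega>"
  have sM: "space M = \<Omega>" unfolding M_def by (simp add: space_restrict_space)
  have m1: "(\<lambda>(t, c, x). u1 t c x) \<in> borel_measurable M" using A1 unfolding U2_def U1_def M_def \<Omega>_def by blast
  have m2: "(\<lambda>(t, c, x). u2 t c x) \<in> borel_measurable M" using A2 unfolding U2_def U1_def M_def \<Omega>_def by blast
  define a where "a q \<omega> = (fst \<omega>, if 0 < q \<and> q < fst (snd \<omega>) then q else fst (snd \<omega>) / 2, snd (snd \<omega>))"
    for q :: real and \<omega> :: "real \<times> real \<times> (real^'d)"
  define b where "b q \<omega> = (fst \<omega>, if 0 < q \<and> q < fst (snd \<omega>) then fst (snd \<omega>) - q else fst (snd \<omega>) / 2, snd (snd \<omega>))"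
    for q :: real and \<omega> :: "real \<times> real \<times> (real^'d)"
  have am: "a q \<in> measurable M M" for q
    unfolding M_def
  proof (rule measurable_restrict_space3)
    show "a q \<in> borel_measurable borel" unfolding a_def borel_prod[symmetric] by measurable
    show "a q \<in> \<Omega> \<rightarrow> \<Omega>" unfolding a_def \<Omega>_def by auto
  qed
  have bm: "b q \<in> measurable M M" for q
    unfolding M_def
  proof (rule measurable_restrict_space3)
    show "b q \<in> borel_measurable borel" unfolding b_def borel_prod[symmetric] by measurable
    show "b q \<in> \<Omega> \<rightarrow> \<Omega>" unfolding b_def \<Omega>_def by auto
  qed
  define W where "W q \<omega> = (\<lambda>(t, c, x). u1 t c x) (a q \<omega>) + (\<lambda>(t, c, x). u2 t c x) (b q \<omega>)" for q \<omega>
  have Wm: "W q \<in> borel_measurable M" for q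
    unfolding W_def by (intro borel_measurable_add measurable_compose[OF am m1] measurable_compose[OF bm m2])
  have Weq: "W q (t, c, x) = (if 0 < q \<and> q < c then u1 t q x + u2 t (c - q) x else u1 t (c/2) x + u2 t (c/2) x)" for q t c x
    unfolding W_def a_def b_def by auto
  have eq: "(\<lambda>(t, c, x). supconv u1 u2 t c x) \<omega> = (SUP q\<in>\<rat>. W q \<omega>)" if "\<omega> \<in> space M" for \<omega>
  proof -
    obtain t c x where \<omega>: "\<omega> = (t, c, x)" by (cases \<omega>) auto
    have t: "t \<in> {0..1}" and c: "0 < c" using that sM \<omega> unfolding \<Omega>_def by auto
    interpret O: oned "\<lambda>c. u1 t c x" "\<lambda>c. u_c u1 t c x" "\<lambda>c. u_cc u1 t c x"
      "\<lambda>c. u2 t c x" "\<lambda>c. u_c u2 t c x" "\<lambda>c. u_cc u2 t c x" by (rule od[OF t])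
    have "supconv u1 u2 t c x = sc (\<lambda>c. u1 t c x) (\<lambda>c. u2 t c x) c" by (simp add: supconv_def sc_def)
    also have "\<dots> = (SUP q\<in>\<rat>. W q (t, c, x))" unfolding Weq by (rule O.sc_rat[OF c])
    finally show ?thesis unfolding \<omega> by simp
  qed
  have bdd: "bdd_above ((\<lambda>q. W q \<omega>) ` \<rat>)" if "\<omega> \<in> space M" for \<omega>
  proof -
    obtain t c x where \<omega>: "\<omega> = (t, c, x)" by (cases \<omega>) auto
    have t: "t \<in> {0..1}" and c: "0 < c" using that sM \<omega> unfolding \<Omega>_def by auto
    interpret O: oned "\<lambda>c. u1 t c x" "\<lambda>c. u_c u1 t c x" "\<lambda>c. u_cc u1 t c x"
      "\<lambda>c. u2 t c x" "\<lambda>c. u_c u2 t c x" "\<lambda>c. u_cc u2 t c x" by (rule od[OF t])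
    have "W q \<omega> \<le> sc (\<lambda>c. u1 t c x) (\<lambda>c. u2 t c x) c" for q
      unfolding \<omega> Weq using O.sc_ge[of q c] O.sc_lower[OF c] by auto
    then show ?thesis unfolding bdd_above_def by blast
  qed
  have "(\<lambda>\<omega>. SUP q\<in>\<rat>. W q \<omega>) \<in> borel_measurable M"
    by (rule borel_measurable_cSUP[OF countable_rat Wm bdd])
  then have "(\<lambda>(t, c, x). supconv u1 u2 t c x) \<in> borel_measurable M"
  proof -
    have e: "\<And>\<omega>. \<omega> \<in> space M \<Longrightarrow> (\<lambda>(t, c, x). supconv u1 u2 t c x) \<omega> = (\<lambda>\<omega>. SUP q\<in>\<rat>. W q \<omega>) \<omega>"
      using eq by simp
    have "((\<lambda>(t, c, x). supconv u1 u2 t c x) \<in> borel_measurable M) = ((\<lambda>\<omega>. SUP q\<in>\<rat>. W q \<omega>) \<in> borel_measurable M)"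
      by (rule measurable_cong[where M=M and M'=borel and f="\<lambda>(t, c, x). supconv u1 u2 t c x" and g="\<lambda>\<omega>. SUP q\<in>\<rat>. W q \<omega>"]) (rule e)
    then show ?thesis using \<open>(\<lambda>\<omega>. SUP q\<in>\<rat>. W q \<omega>) \<in> borel_measurable M\<close> by simp
  qed
  then show ?thesis unfolding M_def \<Omega>_def .
qed

lemma main:
  "supconv u1 u2 \<in> U2 \<and>
    (\<forall>t\<in>{0..1}. \<forall>c>0. \<forall>x.
       (\<exists>!f. 0 < f \<and> f < c \<and> u_c (supconv u1 u2) t c x = u_c u1 t f x \<and> u_c (supconv u1 u2) t c x = u_c u2 t (c - f) x) \<and>
       (\<forall>f. 0 < f \<and> f < c \<and> u_c (supconv u1 u2) t c x = u_c u1 t f x \<and> u_c (supconv u1 u2) t c x = u_c u2 t (c - f) x \<longrightarrow>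
          u_c (supconv u1 u2) t c x / u_cc (supconv u1 u2) t c x
            = u_c u1 t f x / u_cc u1 t f x + u_c u2 t (c - f) x / u_cc u2 t (c - f) x \<and>
          (\<forall>i. u_cx (supconv u1 u2) i t c x / u_cc (supconv u1 u2) t c x
            = u_cx u1 i t f x / u_cc u1 t f x + u_cx u2 i t (c - f) x / u_cc u2 t (c - f) x)))"
proof (intro conjI ballI allI impI)
  have inada: "\<forall>t\<in>{0..1}. \<forall>x. inada (\<lambda>c. supconv u1 u2 t c x)"
    using oned.h_inada[OF od] unfolding u_fun by blast
  have d1: "\<forall>t\<in>{0..1}. \<forall>c>0. \<forall>x. (\<lambda>c'. u_c (supconv u1 u2) t c' x) differentiable at c"
    using ucc_deriv real_differentiable_def by blast
  have d2: "\<forall>t\<in>{0..1}. \<forall>c>0. \<forall>x i. (\<lambda>s. u_c (supconv u1 u2) t c (x + s *\<^sub>R axis i 1)) differentiable at 0"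
    using ucx_deriv real_differentiable_def by blast
  show "supconv u1 u2 \<in> U2"
    unfolding U2_def U1_def
  proof (intro CollectI conjI)
    show "(\<lambda>(t, c, x). supconv u1 u2 t c x) \<in> borel_measurable (restrict_space borel ({0..1} \<times> {0<..} \<times> UNIV))"
      by (rule meas)
  qed (use inada growth d1 d2 ucc_cont ucx_cont ucc_neg Nbound in auto)
next
  fix t c :: real and x :: "real^'d" assume t: "t \<in> {0..1}" and c: "0 < c"
  have F: "0 < Fz t c x" "Fz t c x < c" "u_c u1 t (Fz t c x) x = u_c u2 t (c - Fz t c x) x"
    using Fz_prop[OF t c] by auto
  show "\<exists>!f. 0 < f \<and> f < c \<and> u_c (supconv u1 u2) t c x = u_c u1 t f x \<and> u_c (supconv u1 u2) t c x = u_c u2 t (c - f) x"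
  proof (rule ex1I[of _ "Fz t c x"])
    show "0 < Fz t c x \<and> Fz t c x < c \<and> u_c (supconv u1 u2) t c x = u_c u1 t (Fz t c x) x \<and>
      u_c (supconv u1 u2) t c x = u_c u2 t (c - Fz t c x) x" using F uc[OF t c] by simp
  next
    fix f assume "0 < f \<and> f < c \<and> u_c (supconv u1 u2) t c x = u_c u1 t f x \<and> u_c (supconv u1 u2) t c x = u_c u2 t (c - f) x"
    then show "f = Fz t c x" using Fz_eq[OF t] by auto
  qed
next
  fix t c f :: real and x :: "real^'d" assume t: "t \<in> {0..1}" and c: "0 < c"
    and f: "0 < f \<and> f < c \<and> u_c (supconv u1 u2) t c x = u_c u1 t f x \<and> u_c (supconv u1 u2) t c x = u_c u2 t (c - f) x"
  have fF: "f = Fz t c x" using f Fz_eq[OF t] by auto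
  have A: "u_cc u1 t f x < 0" and B: "u_cc u2 t (c - f) x < 0" using AB_neg[OF t c, of x] fF by auto
  show "u_c (supconv u1 u2) t c x / u_cc (supconv u1 u2) t c x
            = u_c u1 t f x / u_cc u1 t f x + u_c u2 t (c - f) x / u_cc u2 t (c - f) x"
  proof -
    have "u_c (supconv u1 u2) t c x / u_cc (supconv u1 u2) t c x =
      u_c (supconv u1 u2) t c x / (u_cc u1 t f x * (u_cc u2 t (c - f) x / (u_cc u1 t f x + u_cc u2 t (c - f) x)))"
      using ucc[OF t c, of x] fF by simp
    also have "\<dots> = u_c (supconv u1 u2) t c x / u_cc u1 t f x + u_c (supconv u1 u2) t c x / u_cc u2 t (c - f) x"
      by (rule alg1[OF A B])
    finally show ?thesis using f by simp
  qed
  fix i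
  show "u_cx (supconv u1 u2) i t c x / u_cc (supconv u1 u2) t c x
            = u_cx u1 i t f x / u_cc u1 t f x + u_cx u2 i t (c - f) x / u_cc u2 t (c - f) x"
    using ucx[OF t c, of i x] ucc[OF t c, of x] fF alg2[OF A B, of "u_cx u1 i t f x" "u_cx u2 i t (c - f) x"] by simp
qed

end


theorem lemma5:
  fixes u1 u2 :: "real \<Rightarrow> real \<Rightarrow> real^'d \<Rightarrow> real"
  assumes "u1 \<in> U2" and "u2 \<in> U2"
  defines "u \<equiv> supconv u1 u2"
  shows "u \<in> U2 \<and>
    (\<forall>t\<in>{0..1}. \<forall>c>0. \<forall>x.
       (\<exists>!f. 0 < f \<and> f < c \<and> u_c u t c x = u_c u1 t f x \<and> u_c u t c x = u_c u2 t (c - f) x) \<and>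
       (\<forall>f. 0 < f \<and> f < c \<and> u_c u t c x = u_c u1 t f x \<and> u_c u t c x = u_c u2 t (c - f) x \<longrightarrow>
          u_c u t c x / u_cc u t c x
            = u_c u1 t f x / u_cc u1 t f x + u_c u2 t (c - f) x / u_cc u2 t (c - f) x \<and>
          (\<forall>i. u_cx u i t c x / u_cc u t c x
            = u_cx u1 i t f x / u_cc u1 t f x + u_cx u2 i t (c - f) x / u_cc u2 t (c - f) x)))"
proof -
  interpret pair u1 u2 by unfold_locales (rule assms)+
  show ?thesis unfolding u_def by (rule main)
qed

end
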